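(* Let $(Z,S)$ be a random pair with joint distribution $\mathcal P$, where $Z$ takes values in a measurable space $\mathcal Z$ and $S$ takes values in $\mathcal S=\{0,1\}$. Assume $\pi_s:=\Pr(S=s)>0$ for $s=0,1$. Fix a classifier $f$ and measurable functions $\ell(f,\cdot,\cdot),\ \mu(f,\cdot,\cdot):\mathcal Z\times\mathcal S\to\{0,1\}$; in particular $\ell(f,Z,S)$ and $\mu(f,Z,S)$ have finite variance. Fix $\lambda\in[0,1]$ and a fairness penalty $\phi:\mathbb R^2\to\mathbb R_{\ge 0}$. For $s\in\{0,1\}$ define the population quantities $L_{\mathcal P,s}(f)=\mathbb E[\ell(f,Z,S)\mid S=s]$, $(\sigma^\ell_s)^2=\mathbb V[\ell(f,Z,S)\mid S=s]$, $M_{\mathcal P,s}(f)=\mathbb E[\mu(f,Z,S)\mid S=s]$, $(\sigma^\mu_s)^2=\mathbb V[\mu(f,Z,S)\mid S=s]$, and $c_s=\operatorname{Cov}[\ell(f,Z,S),\mu(f,Z,S)\mid S=s]$. Assume $\phi$ is differentiable at $(M_{\mathcal P,0}(f),M_{\mathcal P,1}(f))$ and write $(k_0,k_1)^T=\nabla\phi\big(M_{\mathcal P,0}(f),M_{\mathcal P,1}(f)\big)$. The population risk is $$L_{\mathcal P}(f)=\lambda\,\mathbb E[\ell(f,Z,S)]+(1-\lambda)\,\phi\big(M_{\mathcal P,0}(f),M_{\mathcal P,1}(f)\big).$$ Let $\mathcal D=\{(Z_j,S_j)\}_{j=1}^m$ be i.i.d. samples from $\mathcal P$, let $m_s=|\{j:S_j=s\}|$,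 and define $l^{(m)}(\mathcal D)=\frac1m\sum_{j=1}^m\ell(f,Z_j,S_j)$, $l^{(m_s)}_s(\mathcal D)=\frac1{m_s}\sum_{j:S_j=s}\mu(f,Z_j,S_j)$ (set to $0$, say, when $m_s=0$), and the sample risk $$L_{\mathcal D}(f)=\lambda\, l^{(m)}(\mathcal D)+(1-\lambda)\,\phi\big(l^{(m_0)}_0(\mathcal D),\,l^{(m_1)}_1(\mathcal D)\big).$$ Then, as $m\to\infty$, $$\sqrt m\,\big[L_{\mathcal D}(f)-L_{\mathcal P}(f)\big]\ \xrightarrow{d}\ N\big(0,\mathbb V_{\lim}(f)\big),$$ where $$\mathbb V_{\lim}(f)=\lambda^2\sum_{s\in\{0,1\}}\pi_s(\sigma^\ell_s)^2+\lambda^2\,\pi_0\pi_1\big(L_{\mathcal P,0}(f)-L_{\mathcal P,1}(f)\big)^2+(1-\lambda)^2\sum_{s\in\{0,1\}}k_s^2\,\frac{(\sigma^\mu_s)^2}{\pi_s}+2\lambda(1-\lambda)\sum_{s\in\{0,1\}}k_s\,c_s .$$ (The second term is the paper's $\lambda^2\sum_{s\neq s'}\pi_s\pi_{s'}(L_{\mathcal P,s}-L_{\mathcal P,s'})^2$ with the sum taken over unordered pairs $\{s,s'\}$.)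
   Context: Here $\ell$ plays the role of a performance loss indicator (e.g. misclassification $\mathbf 1\{\hat Y\neq Y\}$) and $\mu$ the indicator entering a group fairness criterion (e.g. $\mathbf 1\{\hat Y=1\}$ for demographic parity), with $\phi$ measuring discrepancy between the two group-wise means (e.g. $\phi(x,y)=|x-y|$ away from the diagonal). $\mathbb V[\cdot\mid S=s]$ and $\operatorname{Cov}[\cdot,\cdot\mid S=s]$ denote conditional variance and covariance given $S=s$. Convergence is in distribution. *)

theory Defs
  imports "HOL-Probability.Probability"
begin

definition grp_prob :: "('z \<times> nat) measure \<Rightarrow> nat \<Rightarrow> real" where
  "grp_prob P s = measure P {x \<in> space P. snd x = s}"

definition cond_mean :: "('z \<times> nat) measure \<Rightarrow> ('z \<times> nat \<Rightarrow> real) \<Rightarrow> nat \<Rightarrow> real" where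
  "cond_mean P g s =
     (\<integral>x. g x * indicator {y \<in> space P. snd y = s} x \<partial>P) / grp_prob P s"

definition cond_var :: "('z \<times> nat) measure \<Rightarrow> ('z \<times> nat \<Rightarrow> real) \<Rightarrow> nat \<Rightarrow> real" where
  "cond_var P g s = cond_mean P (\<lambda>x. (g x - cond_mean P g s)\<^sup>2) s"

definition cond_cov :: "('z \<times> nat) measure \<Rightarrow> ('z \<times> nat \<Rightarrow> real) \<Rightarrow> ('z \<times> nat \<Rightarrow> real) \<Rightarrow> nat \<Rightarrow> real" where
  "cond_cov P g h s = cond_mean P (\<lambda>x. (g x - cond_mean P g s) * (h x - cond_mean P h s)) s"

definition normal0 :: "real \<Rightarrow> real measure" where
  "normal0 v = (if v = 0 then return borel 0 else density lborel (normal_density 0 (sqrt v)))"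

definition grp_count :: "nat \<Rightarrow> (nat \<Rightarrow> 'z \<times> nat) \<Rightarrow> nat \<Rightarrow> nat" where
  "grp_count m D s = card {j. j < m \<and> snd (D j) = s}"

definition samp_mean :: "nat \<Rightarrow> ('z \<times> nat \<Rightarrow> real) \<Rightarrow> (nat \<Rightarrow> 'z \<times> nat) \<Rightarrow> real" where
  "samp_mean m g D = (\<Sum>j<m. g (D j)) / real m"

definition samp_grp_mean :: "nat \<Rightarrow> ('z \<times> nat \<Rightarrow> real) \<Rightarrow> (nat \<Rightarrow> 'z \<times> nat) \<Rightarrow> nat \<Rightarrow> real" where
  "samp_grp_mean m g D s =
     (if grp_count m D s = 0 then 0
      else (\<Sum>j\<in>{j. j < m \<and> snd (D j) = s}. g (D j)) / real (grp_count m D s))"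

end

theory Submission
  imports Defs "HOL-Probability.Probability"
begin

lemma sum_01_nat:
  fixes f :: "nat \<Rightarrow> real"
  assumes "\<And>j. j < m \<Longrightarrow> f j \<in> {0,1}"
  shows "\<exists>k\<le>m. (\<Sum>j<m. f j) = real k"
  using assms
proof (induction m)
  case 0 then show ?case by auto
next
  case (Suc m)
  then obtain k where k: "k \<le> m" "(\<Sum>j<m. f j) = real k" by auto
  have "f m \<in> {0,1}" using Suc.prems by auto
  then show ?case
  proof
    assume "f m = 0" then show ?thesis using k by (intro exI[of _ k]) auto
  next
    assume "f m \<in> {1}" then show ?thesis using k by (intro exI[of _ "Suc k"]) auto
  qed
qed

lemma measurable_finite_range_comp:
  fixes h :: "'a \<Rightarrow> real \<times> real" and g :: "real \<times> real \<Rightarrow> real"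
  assumes h: "h \<in> borel_measurable M" and F: "finite F" "h ` space M \<subseteq> F"
  shows "(\<lambda>x. g (h x)) \<in> borel_measurable M"
proof -
  have "(\<lambda>x. \<Sum>p\<in>F. g p * indicator (h -` {p} \<inter> space M) x) \<in> borel_measurable M"
    using h by (intro borel_measurable_sum borel_measurable_times borel_measurable_const
        borel_measurable_indicator measurable_sets[OF h]) auto
  moreover have "\<And>x. x \<in> space M \<Longrightarrow> (\<Sum>p\<in>F. g p * indicator (h -` {p} \<inter> space M) x) = g (h x)"
  proof -
    fix x assume x: "x \<in> space M"
    have "(\<Sum>p\<in>F. g p * indicator (h -` {p} \<inter> space M) x) = (\<Sum>p\<in>F. if p = h x then g p else 0)"
      using x by (intro sum.cong) (auto simp: indicator_def)
    also have "\<dots> = g (h x)" using F x by (auto simp add: sum.delta')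
    finally show "(\<Sum>p\<in>F. g p * indicator (h -` {p} \<inter> space M) x) = g (h x)" .
  qed
  ultimately show ?thesis by (rule measurable_cong[THEN iffD1, rotated]) 
qed

lemma grp_count_sum: "real (grp_count m D s) = (\<Sum>j<m. if snd (D j) = s then 1 else 0)"
proof -
  have "{j. j < m \<and> snd (D j) = s} = {j\<in>{..<m}. snd (D j) = s}" by auto
  then show ?thesis unfolding grp_count_def by (simp add: sum.inter_filter[symmetric])
qed

lemma grp_sum: fixes D :: "nat \<Rightarrow> 'z \<times> nat" shows "(\<Sum>j\<in>{j. j < m \<and> snd (D j) = s}. g (D j)) = (\<Sum>j<m. if snd (D j) = s then g (D j) else 0)"
proof -
  have *: "{j. j < m \<and> snd (D j) = s} = {j\<in>{..<m}. snd (D j) = s}" by auto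
  show ?thesis by (simp only: *) (subst sum.inter_filter, simp_all)
qed

lemma samp_grp_mean_alt:
  "samp_grp_mean m g D s = (if (\<Sum>j<m. if snd (D j) = s then 1 else 0::real) = 0 then 0
     else (\<Sum>j<m. if snd (D j) = s then g (D j) else 0) / (\<Sum>j<m. if snd (D j) = s then 1 else 0))"
  unfolding samp_grp_mean_def grp_sum grp_count_sum[symmetric] by simp

lemma (in prob_space) cdf_distr_eq:
  assumes "f \<in> borel_measurable M"
  shows "cdf (distr M borel f) y = prob {\<omega> \<in> space M. f \<omega> \<le> y}"
proof -
  have "cdf (distr M borel f) y = prob (f -` {..y} \<inter> space M)"
    unfolding cdf_def by (rule measure_distr[OF assms]) simp
  also have "f -` {..y} \<inter> space M = {\<omega> \<in> space M. f \<omega> \<le> y}" by auto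
  finally show ?thesis .
qed

lemma (in prob_space) slutsky:
  fixes A B :: "nat \<Rightarrow> 'a \<Rightarrow> real"
  assumes Am[measurable]: "\<And>n. A n \<in> borel_measurable M"
    and Bm[measurable]: "\<And>n. B n \<in> borel_measurable M"
    and conv: "weak_conv_m (\<lambda>n. distr M borel (A n)) \<mu>"
    and mu: "real_distribution \<mu>"
    and small: "\<And>\<epsilon>. \<epsilon> > 0 \<Longrightarrow> (\<lambda>n. prob {x \<in> space M. \<epsilon> < \<bar>B n x - A n x\<bar>}) \<longlonglongrightarrow> 0"
  shows "weak_conv_m (\<lambda>n. distr M borel (B n)) \<mu>"
  unfolding weak_conv_m_def weak_conv_def
proof (intro allI impI)
  interpret mu: real_distribution \<mu> by (rule mu)
  let ?F = "cdf \<mu>"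
  fix x assume cont: "isCont ?F x"
  show "(\<lambda>n. cdf (distr M borel (B n)) x) \<longlonglongrightarrow> ?F x"
  proof (rule LIMSEQ_I)
    fix r :: real assume r: "r > 0"
    obtain \<delta> where \<delta>: "\<delta> > 0" "\<And>y. y \<noteq> x \<and> norm (y - x) < \<delta> \<Longrightarrow> norm (?F y - ?F x) < r / 3"
      using LIM_D[OF cont[unfolded isCont_def], of "r/3"] r by auto
    have mono: "mono ?F" by (auto intro: monoI mu.cdf_nondecreasing)
    have ctbl: "countable ((\<lambda>y. y - x) ` {y. \<not> isCont ?F y} \<union> (\<lambda>y. x - y) ` {y. \<not> isCont ?F y})"
      using mono_ctble_discont[OF mono] by auto
    obtain \<epsilon> where \<epsilon>: "\<epsilon> \<in> {0<..<\<delta>}"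
      "\<epsilon> \<notin> (\<lambda>y. y - x) ` {y. \<not> isCont ?F y} \<union> (\<lambda>y. x - y) ` {y. \<not> isCont ?F y}"
      using open_minus_countable[OF ctbl, of "{0<..<\<delta>}"] \<delta> by auto
    have c1: "isCont ?F (x + \<epsilon>)"
    proof (rule ccontr)
      assume "\<not> isCont ?F (x + \<epsilon>)"
      then have "(\<lambda>y. y - x) (x + \<epsilon>) \<in> (\<lambda>y. y - x) ` {y. \<not> isCont ?F y}" by blast
      then show False using \<epsilon> by auto
    qed
    have c2: "isCont ?F (x - \<epsilon>)"
    proof (rule ccontr)
      assume "\<not> isCont ?F (x - \<epsilon>)"
      then have "(\<lambda>y. x - y) (x - \<epsilon>) \<in> (\<lambda>y. x - y) ` {y. \<not> isCont ?F y}" by blast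
      then show False using \<epsilon> by auto
    qed
    have e0: "\<epsilon> > 0" "\<epsilon> < \<delta>" using \<epsilon> by auto
    have "\<bar>?F (x + \<epsilon>) - ?F x\<bar> < r / 3" using \<delta>(2)[of "x + \<epsilon>"] e0 by auto
    then have Fp: "?F (x + \<epsilon>) < ?F x + r / 3" by arith
    have "\<bar>?F (x - \<epsilon>) - ?F x\<bar> < r / 3" using \<delta>(2)[of "x - \<epsilon>"] e0 by auto
    then have Fm: "?F (x - \<epsilon>) > ?F x - r / 3" by arith
    obtain N1 where N1: "\<And>n. n \<ge> N1 \<Longrightarrow> norm (cdf (distr M borel (A n)) (x + \<epsilon>) - ?F (x + \<epsilon>)) < r / 3"
      using LIMSEQ_D[OF conv[unfolded weak_conv_m_def weak_conv_def, rule_format, OF c1], of "r/3"] r by auto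
    obtain N2 where N2: "\<And>n. n \<ge> N2 \<Longrightarrow> norm (cdf (distr M borel (A n)) (x - \<epsilon>) - ?F (x - \<epsilon>)) < r / 3"
      using LIMSEQ_D[OF conv[unfolded weak_conv_m_def weak_conv_def, rule_format, OF c2], of "r/3"] r by auto
    obtain N3 where N3: "\<And>n. n \<ge> N3 \<Longrightarrow> norm (prob {y \<in> space M. \<epsilon> < \<bar>B n y - A n y\<bar>} - 0) < r / 3"
      using LIMSEQ_D[OF small[OF e0(1)], of "r/3"] r by auto
    show "\<exists>no. \<forall>n\<ge>no. norm (cdf (distr M borel (B n)) x - ?F x) < r"
    proof (intro exI allI impI)
      fix n assume n: "n \<ge> max N1 (max N2 N3)"
      let ?S = "{y \<in> space M. \<epsilon> < \<bar>B n y - A n y\<bar>}"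
      have S: "?S \<in> sets M" by measurable
      have pS: "prob ?S < r / 3" using N3[of n] n by simp
      have up: "prob {y \<in> space M. B n y \<le> x} \<le> prob {y \<in> space M. A n y \<le> x + \<epsilon>} + prob ?S"
      proof -
        have "prob {y \<in> space M. B n y \<le> x} \<le> prob ({y \<in> space M. A n y \<le> x + \<epsilon>} \<union> ?S)"
          by (rule finite_measure_mono) auto
        also have "\<dots> \<le> prob {y \<in> space M. A n y \<le> x + \<epsilon>} + prob ?S"
          by (rule measure_Un_le) auto
        finally show ?thesis .
      qed
      have lo: "prob {y \<in> space M. A n y \<le> x - \<epsilon>} \<le> prob {y \<in> space M. B n y \<le> x} + prob ?S"
      proof -
        have "prob {y \<in> space M. A n y \<le> x - \<epsilon>} \<le> prob ({y \<in> space M. B n y \<le> x} \<union> ?S)"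
          by (rule finite_measure_mono) auto
        also have "\<dots> \<le> prob {y \<in> space M. B n y \<le> x} + prob ?S"
          by (rule measure_Un_le) auto
        finally show ?thesis .
      qed
      have h1: "norm (cdf (distr M borel (A n)) (x + \<epsilon>) - ?F (x + \<epsilon>)) < r / 3" using N1[of n] n by auto
      have a1: "prob {y \<in> space M. A n y \<le> x + \<epsilon>} < ?F (x + \<epsilon>) + r / 3"
        using h1 unfolding cdf_distr_eq[OF Am] real_norm_def by arith
      have h2: "norm (cdf (distr M borel (A n)) (x - \<epsilon>) - ?F (x - \<epsilon>)) < r / 3" using N2[of n] n by auto
      have a2: "prob {y \<in> space M. A n y \<le> x - \<epsilon>} > ?F (x - \<epsilon>) - r / 3"
        using h2 unfolding cdf_distr_eq[OF Am] real_norm_def by arith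
      show "norm (cdf (distr M borel (B n)) x - ?F x) < r"
        using up lo a1 a2 pS Fp Fm unfolding cdf_distr_eq[OF Bm] real_norm_def by arith
    qed
  qed
qed

lemma normal_cdf_scale:
  fixes \<sigma> :: real assumes \<sigma>: "\<sigma> > 0"
  shows "cdf (density lborel (normal_density 0 \<sigma>)) y = cdf std_normal_distribution (y / \<sigma>)"
proof -
  interpret S: prob_space std_normal_distribution by (rule prob_space_normal_density) simp
  have d1: "distributed std_normal_distribution lborel (\<lambda>x. x) (\<lambda>x. ennreal (normal_density 0 1 x))"
    unfolding distributed_def by (auto intro!: distr_id2)
  have "distributed std_normal_distribution lborel (\<lambda>x. 0 + \<sigma> * x) (\<lambda>x. ennreal (normal_density (0 + \<sigma> * 0) (\<bar>\<sigma>\<bar> * 1) x))"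
    using S.normal_density_affine[OF d1, where \<alpha>="\<sigma>" and \<beta>=0] \<sigma> by simp
  then have d2: "distr std_normal_distribution lborel (\<lambda>x. \<sigma> * x) = density lborel (normal_density 0 \<sigma>)"
    using \<sigma> by (simp add: distributed_def)
  have "cdf (density lborel (normal_density 0 \<sigma>)) y = measure (distr std_normal_distribution lborel (\<lambda>x. \<sigma> * x)) {..y}"
    by (simp add: cdf_def d2)
  also have "\<dots> = measure std_normal_distribution ((\<lambda>x. \<sigma> * x) -` {..y} \<inter> space std_normal_distribution)"
    by (rule measure_distr) auto
  also have "(\<lambda>x. \<sigma> * x) -` {..y} \<inter> space std_normal_distribution = {..y / \<sigma>}"
    using \<sigma> by (auto simp: pos_le_divide_eq mult.commute)
  finally show ?thesis by (simp add: cdf_def)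
qed

lemma (in prob_space) clt_scaled:
  fixes X :: "nat \<Rightarrow> 'a \<Rightarrow> real"
  assumes X_indep: "indep_vars (\<lambda>i. borel) X UNIV"
    and X_mean: "\<And>n. expectation (X n) = 0"
    and \<sigma>_pos: "\<sigma> > 0"
    and X_square_integrable: "\<And>n. integrable M (\<lambda>x. (X n x)\<^sup>2)"
    and X_variance: "\<And>n. variance (X n) = \<sigma>\<^sup>2"
    and X_distrib: "\<And>n. distr M borel (X n) = \<mu>"
  shows "weak_conv_m (\<lambda>n. distr M borel (\<lambda>x. (\<Sum>i<n. X i x) / sqrt n)) (density lborel (normal_density 0 \<sigma>))"
proof -
  have clt: "weak_conv_m (\<lambda>n. distr M borel (\<lambda>x. (\<Sum>i<n. X i x - 0) / sqrt (n*\<sigma>\<^sup>2))) std_normal_distribution"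
    by (rule central_limit_theorem[OF assms])
  have Xm[measurable]: "X i \<in> borel_measurable M" for i
    using X_indep by (auto simp: indep_vars_def)
  interpret S: real_distribution std_normal_distribution by (rule real_dist_normal_dist)
  have contS: "isCont (cdf std_normal_distribution) z" for z
  proof -
    have "emeasure std_normal_distribution {z} = 0"
      by (simp add: emeasure_density)
    then show ?thesis by (simp add: S.isCont_cdf S.emeasure_eq_measure)
  qed
  show ?thesis unfolding weak_conv_m_def weak_conv_def
  proof (intro allI impI)
    fix y
    have eq: "cdf (distr M borel (\<lambda>x. (\<Sum>i<n. X i x) / sqrt n)) y =
       cdf (distr M borel (\<lambda>x. (\<Sum>i<n. X i x - 0) / sqrt (n*\<sigma>\<^sup>2))) (y / \<sigma>)" for n
    proof -
      have "{x \<in> space M. (\<Sum>i<n. X i x) / sqrt n \<le> y} = {x \<in> space M. (\<Sum>i<n. X i x - 0) / sqrt (n*\<sigma>\<^sup>2) \<le> y / \<sigma>}"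
      proof (cases "n = 0")
        case True then show ?thesis using \<sigma>_pos by (auto simp: zero_le_divide_iff)
      next
        case False
        have "sqrt (n * \<sigma>\<^sup>2) = sqrt n * \<sigma>" using \<sigma>_pos by (simp add: real_sqrt_mult)
        then show ?thesis using \<sigma>_pos False by (auto simp: divide_le_eq le_divide_eq mult.commute mult.left_commute)
      qed
      then show ?thesis by (simp add: cdf_distr_eq)
    qed
    assume "isCont (cdf (density lborel (normal_density 0 \<sigma>))) y"
    show "(\<lambda>n. cdf (distr M borel (\<lambda>x. (\<Sum>i<n. X i x) / sqrt n)) y) \<longlonglongrightarrow> cdf (density lborel (normal_density 0 \<sigma>)) y"
      unfolding eq normal_cdf_scale[OF \<sigma>_pos]
      using clt contS unfolding weak_conv_m_def weak_conv_def by blast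
  qed
qed

lemma (in prob_space) inprob_add:
  fixes X Y :: "nat \<Rightarrow> 'a \<Rightarrow> real"
  assumes [measurable]: "\<And>n. X n \<in> borel_measurable M" "\<And>n. Y n \<in> borel_measurable M"
    and X: "\<And>\<epsilon>. \<epsilon> > 0 \<Longrightarrow> (\<lambda>n. prob {x \<in> space M. \<epsilon> < \<bar>X n x\<bar>}) \<longlonglongrightarrow> 0"
    and Y: "\<And>\<epsilon>. \<epsilon> > 0 \<Longrightarrow> (\<lambda>n. prob {x \<in> space M. \<epsilon> < \<bar>Y n x\<bar>}) \<longlonglongrightarrow> 0"
    and e: "\<epsilon> > 0"
  shows "(\<lambda>n. prob {x \<in> space M. \<epsilon> < \<bar>X n x + Y n x\<bar>}) \<longlonglongrightarrow> 0"
proof (rule tendsto_sandwich[of "\<lambda>_. 0" _ _ "\<lambda>n. prob {x \<in> space M. \<epsilon>/2 < \<bar>X n x\<bar>} + prob {x \<in> space M. \<epsilon>/2 < \<bar>Y n x\<bar>}"])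
  show "\<forall>\<^sub>F n in sequentially. 0 \<le> prob {x \<in> space M. \<epsilon> < \<bar>X n x + Y n x\<bar>}" by simp
  show "\<forall>\<^sub>F n in sequentially. prob {x \<in> space M. \<epsilon> < \<bar>X n x + Y n x\<bar>}
     \<le> prob {x \<in> space M. \<epsilon>/2 < \<bar>X n x\<bar>} + prob {x \<in> space M. \<epsilon>/2 < \<bar>Y n x\<bar>}"
  proof (intro always_eventually allI)
    fix n
    have "prob {x \<in> space M. \<epsilon> < \<bar>X n x + Y n x\<bar>} \<le> prob ({x \<in> space M. \<epsilon>/2 < \<bar>X n x\<bar>} \<union> {x \<in> space M. \<epsilon>/2 < \<bar>Y n x\<bar>})"
      by (rule finite_measure_mono) auto
    also have "\<dots> \<le> prob {x \<in> space M. \<epsilon>/2 < \<bar>X n x\<bar>} + prob {x \<in> space M. \<epsilon>/2 < \<bar>Y n x\<bar>}"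
      by (rule measure_Un_le) auto
    finally show "prob {x \<in> space M. \<epsilon> < \<bar>X n x + Y n x\<bar>}
     \<le> prob {x \<in> space M. \<epsilon>/2 < \<bar>X n x\<bar>} + prob {x \<in> space M. \<epsilon>/2 < \<bar>Y n x\<bar>}" .
  qed
  show "(\<lambda>n. prob {x \<in> space M. \<epsilon>/2 < \<bar>X n x\<bar>} + prob {x \<in> space M. \<epsilon>/2 < \<bar>Y n x\<bar>}) \<longlonglongrightarrow> 0"
    using tendsto_add[OF X[of "\<epsilon>/2"] Y[of "\<epsilon>/2"]] e by simp
qed simp

lemma (in prob_space) inprob_scale:
  fixes X :: "nat \<Rightarrow> 'a \<Rightarrow> real"
  assumes [measurable]: "\<And>n. X n \<in> borel_measurable M"
    and X: "\<And>\<epsilon>. \<epsilon> > 0 \<Longrightarrow> (\<lambda>n. prob {x \<in> space M. \<epsilon> < \<bar>X n x\<bar>}) \<longlonglongrightarrow> 0"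
    and e: "\<epsilon> > 0"
  shows "(\<lambda>n. prob {x \<in> space M. \<epsilon> < \<bar>c * X n x\<bar>}) \<longlonglongrightarrow> 0"
proof (cases "c = 0")
  case True then show ?thesis using e by simp
next
  case False
  have "{x \<in> space M. \<epsilon> < \<bar>c * X n x\<bar>} = {x \<in> space M. \<epsilon> / \<bar>c\<bar> < \<bar>X n x\<bar>}" for n
    using False by (auto simp: abs_mult divide_less_eq mult.commute)
  then show ?thesis using X[of "\<epsilon> / \<bar>c\<bar>"] e False by simp
qed

lemma grp_term_bound:
  fixes p n K d a c :: real
  assumes p: "p > 0" and n: "n > 0" and K: "K > 0" and d: "d > 0" "d \<le> p / 2"
    and c: "\<bar>c - n * p\<bar> < n * d" and a: "\<bar>a\<bar> < sqrt n * K"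
  shows "c > n * p / 2" "\<bar>a / c\<bar> \<le> 2 * K / (sqrt n * p)"
    "\<bar>sqrt n * (a / c) - a / (sqrt n * p)\<bar> \<le> 2 * K * d / p\<^sup>2"
proof -
  have "n * d \<le> n * (p / 2)" using n d by (intro mult_left_mono) auto
  then show c2: "c > n * p / 2" using c by (auto simp: abs_less_iff)
  have np: "n * p / 2 > 0" using n p by simp
  have cpos: "c > 0" using c2 np by linarith
  define s where "s = sqrt n"
  have s: "s > 0" using n by (simp add: s_def)
  have sn: "s * s = n" using n by (simp add: s_def)
  have a': "\<bar>a\<bar> < s * K" using a by (simp add: s_def)
  have "\<bar>a / c\<bar> = \<bar>a\<bar> / c" using cpos by simp
  also have "\<dots> \<le> (s * K) / (n * p / 2)"
  proof (rule frac_le)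
    show "0 \<le> s * K" using s K by simp
    show "\<bar>a\<bar> \<le> s * K" using a' by linarith
    show "0 < n * p / 2" using np .
    show "n * p / 2 \<le> c" using c2 by linarith
  qed
  also have "\<dots> = 2 * K / (s * p)" using s p by (simp add: sn[symmetric] field_simps)
  finally show "\<bar>a / c\<bar> \<le> 2 * K / (sqrt n * p)" by (simp add: s_def)
  have "s * (a / c) - a / (s * p) = a * (n * p - c) / (s * c * p)"
    using s cpos p by (simp add: field_simps sn[symmetric])
  then have "\<bar>s * (a / c) - a / (s * p)\<bar> = \<bar>a\<bar> * \<bar>c - n * p\<bar> / (s * c * p)"
    using s cpos p by (simp add: abs_mult abs_minus_commute)
  also have "\<dots> \<le> (s * K) * (n * d) / (s * (n * p / 2) * p)"
  proof (rule frac_le)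
    show "0 \<le> s * K * (n * d)" using s K n d by simp
    show "\<bar>a\<bar> * \<bar>c - n * p\<bar> \<le> s * K * (n * d)"
    proof (rule mult_mono)
      show "\<bar>a\<bar> \<le> s * K" using a' by linarith
      show "\<bar>c - n * p\<bar> \<le> n * d" using c by linarith
      show "0 \<le> s * K" using s K by simp
    qed simp
    show "0 < s * (n * p / 2) * p" using s np p by simp
    show "s * (n * p / 2) * p \<le> s * c * p"
      using s c2 p by (intro mult_right_mono mult_left_mono) auto
  qed
  also have "\<dots> = 2 * K * d / p\<^sup>2" using s n p by (simp add: field_simps power2_eq_square)
  finally show "\<bar>sqrt n * (a / c) - a / (sqrt n * p)\<bar> \<le> 2 * K * d / p\<^sup>2" by (simp add: s_def)
qed

lemma det_bound:
  fixes phi :: "real \<times> real \<Rightarrow> real" and n :: real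
  assumes p0: "p0 > 0" and p1: "p1 > 0" and n: "n > 0" and K: "K > 0" and d: "d > 0" "d \<le> p0 / 2" "d \<le> p1 / 2"
    and c0: "\<bar>c0 - n * p0\<bar> < n * d" and c1: "\<bar>c1 - n * p1\<bar> < n * d"
    and a0: "\<bar>a0\<bar> < sqrt n * K" and a1: "\<bar>a1\<bar> < sqrt n * K"
    and deriv: "\<And>y. norm (y - (M0, M1)) < \<delta> \<Longrightarrow>
        \<bar>phi y - phi (M0, M1) - (k0 * (fst y - M0) + k1 * (snd y - M1))\<bar> \<le> \<eta> * norm (y - (M0, M1))"
    and eta: "\<eta> \<ge> 0"
    and small: "2 * K / (sqrt n * p0) + 2 * K / (sqrt n * p1) < \<delta>"
  shows "\<bar>sqrt n * (phi (M0 + a0 / c0, M1 + a1 / c1) - phi (M0, M1)) - (k0 * a0 / p0 + k1 * a1 / p1) / sqrt n\<bar>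
     \<le> \<eta> * (2 * K / p0 + 2 * K / p1) + \<bar>k0\<bar> * (2 * K * d / p0\<^sup>2) + \<bar>k1\<bar> * (2 * K * d / p1\<^sup>2)"
proof -
  note g0 = grp_term_bound[OF p0 n K d(1) d(2) c0 a0]
  note g1 = grp_term_bound[OF p1 n K d(1) d(3) c1 a1]
  define s where "s = sqrt n"
  have s: "s > 0" using n by (simp add: s_def)
  define D0 where "D0 = a0 / c0"
  define D1 where "D1 = a1 / c1"
  define B0 where "B0 = 2 * K / (s * p0)"
  define B1 where "B1 = 2 * K / (s * p1)"
  have D0: "\<bar>D0\<bar> \<le> B0" using g0(2) by (simp add: D0_def B0_def s_def)
  have D1: "\<bar>D1\<bar> \<le> B1" using g1(2) by (simp add: D1_def B1_def s_def)
  have nrm: "norm ((M0 + D0, M1 + D1) - (M0, M1)) \<le> \<bar>D0\<bar> + \<bar>D1\<bar>"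
    using sqrt_sum_squares_le_sum_abs[of D0 D1] by (simp add: norm_Pair)
  have "norm ((M0 + D0, M1 + D1) - (M0, M1)) < \<delta>"
    using nrm D0 D1 small by (simp add: B0_def B1_def s_def)
  from deriv[OF this] nrm eta
  have rho: "\<bar>phi (M0 + D0, M1 + D1) - phi (M0, M1) - (k0 * D0 + k1 * D1)\<bar> \<le> \<eta> * (B0 + B1)"
  proof -
    assume h: "\<bar>phi (M0 + D0, M1 + D1) - phi (M0, M1) - (k0 * (fst (M0 + D0, M1 + D1) - M0) + k1 * (snd (M0 + D0, M1 + D1) - M1))\<bar>
       \<le> \<eta> * norm ((M0 + D0, M1 + D1) - (M0, M1))"
    have "\<eta> * norm ((M0 + D0, M1 + D1) - (M0, M1)) \<le> \<eta> * (B0 + B1)"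
      using nrm D0 D1 eta by (intro mult_left_mono) auto
    with h show ?thesis by simp
  qed
  define rh where "rh = phi (M0 + D0, M1 + D1) - phi (M0, M1) - (k0 * D0 + k1 * D1)"
  have T0: "\<bar>s * D0 - a0 / (s * p0)\<bar> \<le> 2 * K * d / p0\<^sup>2" using g0(3) by (simp add: D0_def s_def)
  have T1: "\<bar>s * D1 - a1 / (s * p1)\<bar> \<le> 2 * K * d / p1\<^sup>2" using g1(3) by (simp add: D1_def s_def)
  have eq: "s * (phi (M0 + D0, M1 + D1) - phi (M0, M1)) - (k0 * a0 / p0 + k1 * a1 / p1) / s
      = s * rh + k0 * (s * D0 - a0 / (s * p0)) + k1 * (s * D1 - a1 / (s * p1))"
    using s p0 p1 by (simp add: rh_def field_simps)
  have "\<bar>s * rh + k0 * (s * D0 - a0 / (s * p0)) + k1 * (s * D1 - a1 / (s * p1))\<bar>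
     \<le> s * \<bar>rh\<bar> + \<bar>k0\<bar> * \<bar>s * D0 - a0 / (s * p0)\<bar> + \<bar>k1\<bar> * \<bar>s * D1 - a1 / (s * p1)\<bar>"
  proof -
    have tri: "\<bar>x + y + z\<bar> \<le> \<bar>x\<bar> + \<bar>y\<bar> + \<bar>z\<bar>" for x y z :: real by arith
    show ?thesis using tri[of "s * rh" "k0 * (s * D0 - a0 / (s * p0))" "k1 * (s * D1 - a1 / (s * p1))"] s
      by (simp add: abs_mult)
  qed
  also have "\<dots> \<le> s * (\<eta> * (B0 + B1)) + \<bar>k0\<bar> * (2 * K * d / p0\<^sup>2) + \<bar>k1\<bar> * (2 * K * d / p1\<^sup>2)"
    using rho T0 T1 s unfolding rh_def by (intro add_mono mult_left_mono) auto
  also have "s * (\<eta> * (B0 + B1)) = \<eta> * (2 * K / p0 + 2 * K / p1)"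
    using s p0 p1 by (simp add: B0_def B1_def field_simps)
  finally show ?thesis unfolding eq[unfolded s_def D0_def D1_def, symmetric] s_def D0_def D1_def .
qed

locale ctx =
  fixes Mz :: "'z measure" and P :: "('z \<times> nat) measure" and ell mu :: "'z \<times> nat \<Rightarrow> real"
  assumes prob: "prob_space P"
    and sets_P: "sets P = sets (Mz \<Otimes>\<^sub>M count_space {0, 1})"
    and pi_pos: "\<And>s. s \<in> {0, 1} \<Longrightarrow> grp_prob P s > 0"
    and ell_meas[measurable]: "ell \<in> borel_measurable P"
    and mu_meas[measurable]: "mu \<in> borel_measurable P"
    and ell_01: "\<And>x. x \<in> space P \<Longrightarrow> ell x \<in> {0, 1}"
    and mu_01: "\<And>x. x \<in> space P \<Longrightarrow> mu x \<in> {0, 1}"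
begin

sublocale P: prob_space P by (rule prob)

lemma space_P: "space P = space Mz \<times> {0,1}"
proof -
  have "space P = space (Mz \<Otimes>\<^sub>M count_space {0,1})" by (rule sets_eq_imp_space_eq[OF sets_P])
  then show ?thesis by (simp only: space_pair_measure space_count_space)
qed

lemma snd_P: assumes "x \<in> space P" shows "snd x = 0 \<or> snd x = 1"
proof -
  have "x \<in> space Mz \<times> {0,1}" using assms by (simp only: space_P)
  then have "snd x \<in> {0,1}" by (rule SigmaE) simp
  then show ?thesis by simp
qed

lemma snd_meas[measurable]: "snd \<in> measurable P (count_space {0,1})"
  using measurable_snd[of Mz "count_space {0,1::nat}"] by (simp add: measurable_cong_sets[OF sets_P refl])

lemma grp_set_meas[measurable]: "{x \<in> space P. snd x = s} \<in> sets P"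
proof -
  have "{x \<in> space P. snd x = s} = snd -` {s} \<inter> space P" by auto
  also have "\<dots> \<in> sets P"
  proof (cases "s \<in> {0,1}")
    case True then show ?thesis by (intro measurable_sets[OF snd_meas]) auto
  next
    case False then have "snd -` {s} \<inter> space P = {}" by (auto dest!: snd_P)
    then show ?thesis by simp
  qed
  finally show ?thesis .
qed

lemma ind_meas[measurable]: "(\<lambda>x. if snd x = s then (1::real) else 0) \<in> borel_measurable P"
proof -
  have "(\<lambda>x. indicator {x \<in> space P. snd x = s} x :: real) \<in> borel_measurable P" by measurable
  then show ?thesis by (rule measurable_cong[THEN iffD1, rotated]) (auto simp: indicator_def)
qed

definition q :: "real \<Rightarrow> real \<Rightarrow> nat \<Rightarrow> real" where
  "q e u s = measure P {x \<in> space P. ell x = e \<and> mu x = u \<and> snd x = s}"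

lemma cell_meas[measurable]: "{x \<in> space P. ell x = e \<and> mu x = u \<and> snd x = s} \<in> sets P"
proof -
  have "{x \<in> space P. ell x = e \<and> mu x = u \<and> snd x = s} = 
     {x \<in> space P. ell x = e} \<inter> {x \<in> space P. mu x = u} \<inter> {x \<in> space P. snd x = s}" by auto
  also have "\<dots> \<in> sets P" by measurable
  finally show ?thesis .
qed

lemma sum3_delta:
  fixes g :: "real \<Rightarrow> real \<Rightarrow> nat \<Rightarrow> real"
  assumes "a \<in> {0,1}" "b \<in> {0,1}" "c \<in> {0,1}"
  shows "(\<Sum>e\<in>{0,1}. \<Sum>u\<in>{0,1}. \<Sum>s\<in>{0,1::nat}. g e u s * (if e = a \<and> u = b \<and> s = c then 1 else 0)) = g a b c"
  using assms by (auto simp: if_distrib)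

lemma integral_cells:
  assumes "\<And>x. x \<in> space P \<Longrightarrow> f x = g (ell x) (mu x) (snd x)"
  shows "integral\<^sup>L P f = (\<Sum>e\<in>{0,1}. \<Sum>u\<in>{0,1}. \<Sum>s\<in>{0,1::nat}. g e u s * q e u s)"
proof -
  let ?C = "\<lambda>e u s. {x \<in> space P. ell x = e \<and> mu x = u \<and> snd x = s}"
  have eq: "f x = (\<Sum>e\<in>{0,1}. \<Sum>u\<in>{0,1}. \<Sum>s\<in>{0,1::nat}. g e u s * indicator (?C e u s) x)"
    if x: "x \<in> space P" for x
  proof -
    have "snd x \<in> {0,1}" using snd_P[OF x] by auto
    then have "f x = (\<Sum>e\<in>{0,1}. \<Sum>u\<in>{0,1}. \<Sum>s\<in>{0,1::nat}. g e u s * (if e = ell x \<and> u = mu x \<and> s = snd x then 1 else 0))"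
      using assms[OF x] ell_01[OF x] mu_01[OF x] by (simp only: sum3_delta)
    also have "\<dots> = (\<Sum>e\<in>{0,1}. \<Sum>u\<in>{0,1}. \<Sum>s\<in>{0,1::nat}. g e u s * indicator (?C e u s) x)"
      using x by (intro sum.cong refl) (auto simp: indicator_def)
    finally show ?thesis .
  qed
  have "integral\<^sup>L P f = integral\<^sup>L P (\<lambda>x. \<Sum>e\<in>{0,1}. \<Sum>u\<in>{0,1}. \<Sum>s\<in>{0,1::nat}. g e u s * indicator (?C e u s) x)"
    by (rule Bochner_Integration.integral_cong[OF refl eq])
  also have "\<dots> = (\<Sum>e\<in>{0,1}. \<Sum>u\<in>{0,1}. \<Sum>s\<in>{0,1::nat}. g e u s * q e u s)"
  proof -
    have int: "integrable P (\<lambda>x. c * indicator (?C e u s) x :: real)" for c e u s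
      by (intro integrable_mult_right integrable_real_indicator) (auto simp: P.emeasure_eq_measure)
    have i2: "integrable P (\<lambda>x. \<Sum>s\<in>{0,1::nat}. g e u s * indicator (?C e u s) x)" for e u
      by (intro Bochner_Integration.integrable_sum int)
    have i1: "integrable P (\<lambda>x. \<Sum>u\<in>{0,1}. \<Sum>s\<in>{0,1::nat}. g e u s * indicator (?C e u s) x)" for e
      by (intro Bochner_Integration.integrable_sum int)
    have "integral\<^sup>L P (\<lambda>x. \<Sum>e\<in>{0,1}. \<Sum>u\<in>{0,1}. \<Sum>s\<in>{0,1::nat}. g e u s * indicator (?C e u s) x)
      = (\<Sum>e\<in>{0,1}. integral\<^sup>L P (\<lambda>x. \<Sum>u\<in>{0,1}. \<Sum>s\<in>{0,1::nat}. g e u s * indicator (?C e u s) x))"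
      by (rule Bochner_Integration.integral_sum[OF i1])
    also have "\<dots> = (\<Sum>e\<in>{0,1}. \<Sum>u\<in>{0,1}. integral\<^sup>L P (\<lambda>x. \<Sum>s\<in>{0,1::nat}. g e u s * indicator (?C e u s) x))"
      by (intro sum.cong refl Bochner_Integration.integral_sum i2)
    also have "\<dots> = (\<Sum>e\<in>{0,1}. \<Sum>u\<in>{0,1}. \<Sum>s\<in>{0,1::nat}. integral\<^sup>L P (\<lambda>x. g e u s * indicator (?C e u s) x))"
      by (intro sum.cong refl Bochner_Integration.integral_sum int)
    also have "\<dots> = (\<Sum>e\<in>{0,1}. \<Sum>u\<in>{0,1}. \<Sum>s\<in>{0,1::nat}. g e u s * q e u s)"
      by (simp only: integral_mult_right_zero integral_indicator q_def Int_absorb2 subset_iff mem_Collect_eq simp_thms(22) conj_imp_eq_imp_imp) (simp add: Int_absorb2)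
    finally show ?thesis .
  qed
  finally show ?thesis .
qed

end

context ctx begin

abbreviation "\<Omega> \<equiv> PiM (UNIV::nat set) (\<lambda>_. P)"

sublocale O: prob_space \<Omega> by (rule prob_space_PiM) (rule prob)

lemma coord_meas[measurable]: "(\<lambda>\<omega>. \<omega> i) \<in> measurable \<Omega> P"
  by (rule measurable_component_singleton) simp

lemma distr_coord: "distr \<Omega> P (\<lambda>\<omega>. \<omega> i) = P"
  by (rule distr_PiM_component) (auto intro: prob)

lemma integral_coord:
  fixes v :: "'z \<times> nat \<Rightarrow> real"
  assumes [measurable]: "v \<in> borel_measurable P"
  shows "O.expectation (\<lambda>\<omega>. v (\<omega> i)) = P.expectation v"
proof -
  have "P.expectation v = integral\<^sup>L (distr \<Omega> P (\<lambda>\<omega>. \<omega> i)) v" by (simp add: distr_coord)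
  also have "\<dots> = O.expectation (\<lambda>\<omega>. v (\<omega> i))" using integral_distr[of "\<lambda>\<omega>. \<omega> i" \<Omega> P v] assms by simp
  finally show ?thesis ..
qed

lemma indep_coord: "O.indep_vars (\<lambda>_. P) (\<lambda>i \<omega>. \<omega> i) UNIV"
proof -
  have "distr \<Omega> (PiM UNIV (\<lambda>_. P)) (\<lambda>x. \<lambda>i\<in>UNIV. x i) = \<Omega>"
    by (simp add: restrict_UNIV distr_id2)
  also have "\<dots> = PiM UNIV (\<lambda>i. distr \<Omega> P (\<lambda>\<omega>. \<omega> i))"
    by (simp add: distr_coord)
  finally show ?thesis
    by (subst O.indep_vars_iff_distr_eq_PiM) auto
qed

lemma indep_v:
  fixes v :: "'z \<times> nat \<Rightarrow> real"
  assumes [measurable]: "v \<in> borel_measurable P"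
  shows "O.indep_vars (\<lambda>_. borel) (\<lambda>i \<omega>. v (\<omega> i)) UNIV"
  by (rule O.indep_vars_compose2[OF indep_coord]) simp

lemma chebyshev_sum:
  fixes v :: "'z \<times> nat \<Rightarrow> real"
  assumes [measurable]: "v \<in> borel_measurable P"
    and bnd: "\<And>x. x \<in> space P \<Longrightarrow> \<bar>v x\<bar> \<le> C"
    and mean0: "P.expectation v = 0" and t: "t > 0"
  shows "O.prob {\<omega> \<in> space \<Omega>. t \<le> \<bar>\<Sum>j<m. v (\<omega> j)\<bar>} \<le> real m * P.expectation (\<lambda>x. (v x)\<^sup>2) / t\<^sup>2"
proof -
  have bndO: "\<And>\<omega> i. \<omega> \<in> space \<Omega> \<Longrightarrow> \<bar>v (\<omega> i)\<bar> \<le> C"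
    by (intro bnd measurable_space[OF coord_meas])
  have intv: "integrable \<Omega> (\<lambda>\<omega>. v (\<omega> i))" for i
    by (rule O.integrable_const_bound[where B=C]) (auto intro!: AE_I2 simp: bndO)
  have intp: "integrable \<Omega> (\<lambda>\<omega>. v (\<omega> i) * v (\<omega> j))" for i j
    by (rule O.integrable_const_bound[where B="C*C"])
       (auto intro!: AE_I2 simp: bndO abs_mult intro!: mult_mono' )
  have cross: "O.expectation (\<lambda>\<omega>. v (\<omega> i) * v (\<omega> j)) = 0" if "i \<noteq> j" for i j
  proof -
    have ind: "O.indep_vars (\<lambda>_. borel) (\<lambda>i \<omega>. v (\<omega> i)) {i,j}"
      by (rule O.indep_vars_subset[OF indep_v]) auto
    have "O.expectation (\<lambda>\<omega>. \<Prod>k\<in>{i,j}. v (\<omega> k)) = (\<Prod>k\<in>{i,j}. O.expectation (\<lambda>\<omega>. v (\<omega> k)))"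
      by (rule O.indep_vars_lebesgue_integral[OF _ ind]) (auto intro: intv)
    then show ?thesis using that by (simp add: integral_coord mean0)
  qed
  have diag: "O.expectation (\<lambda>\<omega>. v (\<omega> i) * v (\<omega> i)) = P.expectation (\<lambda>x. (v x)\<^sup>2)" for i
    using integral_coord[of "\<lambda>x. (v x)\<^sup>2" i] by (simp add: power2_eq_square)
  have sq: "(\<Sum>j<m. v (\<omega> j))\<^sup>2 = (\<Sum>i<m. \<Sum>j<m. v (\<omega> i) * v (\<omega> j))" for \<omega>
    by (simp add: power2_eq_square sum_product)
  have "O.expectation (\<lambda>\<omega>. (\<Sum>j<m. v (\<omega> j))\<^sup>2) = (\<Sum>i<m. \<Sum>j<m. O.expectation (\<lambda>\<omega>. v (\<omega> i) * v (\<omega> j)))"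
    unfolding sq by (simp add: integral_sum intp integrable_sum)
  also have "\<dots> = (\<Sum>i<m. P.expectation (\<lambda>x. (v x)\<^sup>2))"
  proof (rule sum.cong[OF refl])
    fix i assume i: "i \<in> {..<m}"
    have "(\<Sum>j<m. O.expectation (\<lambda>\<omega>. v (\<omega> i) * v (\<omega> j))) =
       (\<Sum>j<m. if j = i then P.expectation (\<lambda>x. (v x)\<^sup>2) else 0)"
      by (rule sum.cong) (auto simp: cross diag)
    also have "\<dots> = P.expectation (\<lambda>x. (v x)\<^sup>2)" using i by simp
    finally show "(\<Sum>j<m. O.expectation (\<lambda>\<omega>. v (\<omega> i) * v (\<omega> j))) = P.expectation (\<lambda>x. (v x)\<^sup>2)" .
  qed
  also have "\<dots> = real m * P.expectation (\<lambda>x. (v x)\<^sup>2)" by simp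
  finally have E: "O.expectation (\<lambda>\<omega>. (\<Sum>j<m. v (\<omega> j))\<^sup>2) = real m * P.expectation (\<lambda>x. (v x)\<^sup>2)" .
  have "O.prob {\<omega> \<in> space \<Omega>. t \<le> \<bar>\<Sum>j<m. v (\<omega> j)\<bar>} \<le> O.expectation (\<lambda>\<omega>. (\<Sum>j<m. v (\<omega> j))\<^sup>2) / t\<^sup>2"
    by (rule O.second_moment_method) (auto simp: sq intp integrable_sum t)
  then show ?thesis using E by simp
qed

end

context ctx begin

definition pp :: "nat \<Rightarrow> real" where "pp s = q 0 0 s + q 0 1 s + q 1 0 s + q 1 1 s"
definition aa :: "nat \<Rightarrow> real" where "aa s = q 1 0 s + q 1 1 s"
definition bb :: "nat \<Rightarrow> real" where "bb s = q 0 1 s + q 1 1 s"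
definition dd :: "nat \<Rightarrow> real" where "dd s = q 1 1 s"

lemma ind_indicator: "indicator {y \<in> space P. snd y = s} x = (if x \<in> space P \<and> snd x = s then 1 else (0::real))"
  by (simp add: indicator_def)

lemma grp_prob_eq: "s \<in> {0,1} \<Longrightarrow> grp_prob P s = pp s"
proof -
  assume s: "s \<in> {0,1}"
  have "grp_prob P s = P.expectation (indicator {y \<in> space P. snd y = s})"
    by (simp add: grp_prob_def Int_absorb2)
  also have "\<dots> = (\<Sum>e\<in>{0,1}. \<Sum>u\<in>{0,1}. \<Sum>t\<in>{0,1::nat}. (if t = s then 1 else 0) * q e u t)"
    by (rule integral_cells) (simp add: ind_indicator)
  also have "\<dots> = pp s" using s by (auto simp: pp_def)
  finally show ?thesis .
qed

lemma sum_q: "pp 0 + pp 1 = 1"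
proof -
  have "(1::real) = P.expectation (\<lambda>x. 1)" by (simp add: P.prob_space)
  also have "\<dots> = (\<Sum>e\<in>{0,1}. \<Sum>u\<in>{0,1}. \<Sum>t\<in>{0,1::nat}. 1 * q e u t)"
    by (rule integral_cells) simp
  also have "\<dots> = pp 0 + pp 1" by (simp add: pp_def)
  finally show ?thesis by simp
qed

lemma pp_pos: "s \<in> {0,1} \<Longrightarrow> pp s > 0"
  using pi_pos grp_prob_eq by force

lemma cm_ell: "s \<in> {0,1} \<Longrightarrow> cond_mean P ell s = aa s / pp s"
proof -
  assume s: "s \<in> {0,1}"
  have "(\<integral>x. ell x * indicator {y \<in> space P. snd y = s} x \<partial>P) = 
     (\<Sum>e\<in>{0,1}. \<Sum>u\<in>{0,1}. \<Sum>t\<in>{0,1::nat}. (e * (if t = s then 1 else 0)) * q e u t)"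
    by (rule integral_cells) (simp add: ind_indicator)
  also have "\<dots> = aa s" using s by (auto simp: aa_def)
  finally show ?thesis using s by (simp add: cond_mean_def grp_prob_eq)
qed

lemma cm_mu: "s \<in> {0,1} \<Longrightarrow> cond_mean P mu s = bb s / pp s"
proof -
  assume s: "s \<in> {0,1}"
  have "(\<integral>x. mu x * indicator {y \<in> space P. snd y = s} x \<partial>P) = 
     (\<Sum>e\<in>{0,1}. \<Sum>u\<in>{0,1}. \<Sum>t\<in>{0,1::nat}. (u * (if t = s then 1 else 0)) * q e u t)"
    by (rule integral_cells) (simp add: ind_indicator)
  also have "\<dots> = bb s" using s by (auto simp: bb_def)
  finally show ?thesis using s by (simp add: cond_mean_def grp_prob_eq)
qed

lemma cv_ell: "s \<in> {0,1} \<Longrightarrow> cond_var P ell s = (aa s - (aa s)\<^sup>2 / pp s) / pp s"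
proof -
  assume s: "s \<in> {0,1}"
  define L where "L = aa s / pp s"
  have "(\<integral>x. (ell x - L)\<^sup>2 * indicator {y \<in> space P. snd y = s} x \<partial>P) = 
     (\<Sum>e\<in>{0,1}. \<Sum>u\<in>{0,1}. \<Sum>t\<in>{0,1::nat}. ((e - L)\<^sup>2 * (if t = s then 1 else 0)) * q e u t)"
    by (rule integral_cells) (simp add: ind_indicator)
  also have "\<dots> = L\<^sup>2 * (pp s - aa s) + (1 - L)\<^sup>2 * aa s" using s
    by (auto simp: aa_def pp_def algebra_simps)
  also have "\<dots> = aa s - (aa s)\<^sup>2 / pp s" using pp_pos[OF s]
    by (simp add: L_def field_simps power2_eq_square)
  finally show ?thesis using s by (simp add: cond_var_def cond_mean_def[of P "\<lambda>x. (ell x - _)\<^sup>2"] cm_ell grp_prob_eq L_def)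
qed

lemma q_subst: "q 0 0 s = pp s - aa s - bb s + dd s" "q 0 1 s = bb s - dd s" "q 1 0 s = aa s - dd s" "q 1 1 s = dd s"
  by (simp_all add: pp_def aa_def bb_def dd_def)

lemma cv_mu: "s \<in> {0,1} \<Longrightarrow> cond_var P mu s = (bb s - (bb s)\<^sup>2 / pp s) / pp s"
proof -
  assume s: "s \<in> {0,1}"
  define L where "L = bb s / pp s"
  have "(\<integral>x. (mu x - L)\<^sup>2 * indicator {y \<in> space P. snd y = s} x \<partial>P) = 
     (\<Sum>e\<in>{0,1}. \<Sum>u\<in>{0,1}. \<Sum>t\<in>{0,1::nat}. ((u - L)\<^sup>2 * (if t = s then 1 else 0)) * q e u t)"
    by (rule integral_cells) (simp add: ind_indicator)
  also have "\<dots> = L\<^sup>2 * (pp s - bb s) + (1 - L)\<^sup>2 * bb s" using s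
    by (auto simp: bb_def pp_def algebra_simps)
  also have "\<dots> = bb s - (bb s)\<^sup>2 / pp s" using pp_pos[OF s]
    by (simp add: L_def field_simps power2_eq_square)
  finally show ?thesis using s by (simp add: cond_var_def cond_mean_def[of P "\<lambda>x. (mu x - _)\<^sup>2"] cm_mu grp_prob_eq L_def)
qed

lemma cc: "s \<in> {0,1} \<Longrightarrow> cond_cov P ell mu s = (dd s - aa s * bb s / pp s) / pp s"
proof -
  assume s: "s \<in> {0,1}"
  define L where "L = aa s / pp s"
  define M where "M = bb s / pp s"
  have "(\<integral>x. ((ell x - L) * (mu x - M)) * indicator {y \<in> space P. snd y = s} x \<partial>P) = 
     (\<Sum>e\<in>{0,1}. \<Sum>u\<in>{0,1}. \<Sum>t\<in>{0,1::nat}. ((e - L) * (u - M) * (if t = s then 1 else 0)) * q e u t)"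
    by (rule integral_cells) (simp add: ind_indicator)
  also have "\<dots> = dd s - L * bb s - M * aa s + L * M * pp s" using s
    by (auto simp: aa_def bb_def dd_def pp_def algebra_simps)
  also have "\<dots> = dd s - aa s * bb s / pp s" using pp_pos[OF s]
    by (simp add: L_def M_def field_simps power2_eq_square)
  finally show ?thesis using s 
    by (simp add: cond_cov_def cond_mean_def[of P "\<lambda>x. (ell x - _) * (mu x - _)"] cm_mu cm_ell grp_prob_eq L_def M_def)
qed

lemma EX_eq: "P.expectation ell = aa 0 + aa 1"
proof -
  have "P.expectation ell = (\<Sum>e\<in>{0,1}. \<Sum>u\<in>{0,1}. \<Sum>t\<in>{0,1::nat}. e * q e u t)"
    by (rule integral_cells) simp
  also have "\<dots> = aa 0 + aa 1" by (simp add: aa_def)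
  finally show ?thesis .
qed

definition W :: "real \<Rightarrow> real \<Rightarrow> real \<Rightarrow> 'z \<times> nat \<Rightarrow> real" where
  "W lam k0 k1 x = lam * (ell x - P.expectation ell) + (1 - lam) *
     ((if snd x = 0 then k0 * (mu x - cond_mean P mu 0) / grp_prob P 0 else 0)
    + (if snd x = 1 then k1 * (mu x - cond_mean P mu 1) / grp_prob P 1 else 0))"

definition Vlim :: "real \<Rightarrow> real \<Rightarrow> real \<Rightarrow> real" where
  "Vlim lam k0 k1 = 
       (lam\<^sup>2 * (\<Sum>s\<in>{0, 1}. grp_prob P s * cond_var P ell s)
        + lam\<^sup>2 * grp_prob P 0 * grp_prob P 1 * (cond_mean P ell 0 - cond_mean P ell 1)\<^sup>2
        + (1 - lam)\<^sup>2 * (k0\<^sup>2 * cond_var P mu 0 / grp_prob P 0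
                         + k1\<^sup>2 * cond_var P mu 1 / grp_prob P 1)
        + 2 * lam * (1 - lam) * (k0 * cond_cov P ell mu 0 + k1 * cond_cov P ell mu 1))"

lemma W_alt:
  "W lam k0 k1 x = lam * (ell x - (aa 0 + aa 1)) + (if snd x = 0 then ((1 - lam) * k0 / pp 0) * (mu x - bb 0 / pp 0) else 0)
     + (if snd x = 1 then ((1 - lam) * k1 / pp 1) * (mu x - bb 1 / pp 1) else 0)"
proof -
  have p0: "pp 0 \<noteq> 0" and p1: "pp 1 \<noteq> 0" using pp_pos by force+
  show ?thesis using p0 p1 by (simp add: W_def EX_eq cm_mu grp_prob_eq)
qed

lemma EW: "P.expectation (W lam k0 k1) = 0"
proof -
  define E where "E = aa 0 + aa 1"
  define M0 where "M0 = bb 0 / pp 0"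
  define M1 where "M1 = bb 1 / pp 1"
  define c0 where "c0 = (1 - lam) * k0 / pp 0"
  define c1 where "c1 = (1 - lam) * k1 / pp 1"
  have p0: "pp 0 > 0" and p1: "pp 1 > 0" using pp_pos by auto
  have "P.expectation (W lam k0 k1) = (\<Sum>e\<in>{0,1}. \<Sum>u\<in>{0,1}. \<Sum>t\<in>{0,1::nat}. 
      (lam * (e - E) + (if t = 0 then c0 * (u - M0) else 0) + (if t = 1 then c1 * (u - M1) else 0)) * q e u t)"
    by (rule integral_cells) (simp add: W_alt E_def M0_def M1_def c0_def c1_def)
  also have "\<dots> = lam * (aa 0 + aa 1 - E * (pp 0 + pp 1)) + c0 * (bb 0 - M0 * pp 0) + c1 * (bb 1 - M1 * pp 1)"
    by (simp add: q_subst algebra_simps)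
  also have "\<dots> = 0" using p0 p1 sum_q by (simp add: E_def M0_def M1_def)
  finally show ?thesis .
qed

lemma EW2: "P.expectation (\<lambda>x. (W lam k0 k1 x)\<^sup>2) = Vlim lam k0 k1"
proof -
  define E where "E = aa 0 + aa 1"
  define M0 where "M0 = bb 0 / pp 0"
  define M1 where "M1 = bb 1 / pp 1"
  define c0 where "c0 = (1 - lam) * k0 / pp 0"
  define c1 where "c1 = (1 - lam) * k1 / pp 1"
  define G where "G s c M = lam\<^sup>2 * ((1 - E)\<^sup>2 * aa s + E\<^sup>2 * (pp s - aa s))
      + 2 * lam * c * (dd s - E * bb s - M * aa s + E * M * pp s) + c\<^sup>2 * (bb s - 2 * M * bb s + M\<^sup>2 * pp s)" for s c M
  have p0: "pp 0 > 0" and p1: "pp 1 > 0" using pp_pos by auto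
  have "P.expectation (\<lambda>x. (W lam k0 k1 x)\<^sup>2) = (\<Sum>e\<in>{0,1}. \<Sum>u\<in>{0,1}. \<Sum>t\<in>{0,1::nat}. 
      (lam * (e - E) + (if t = 0 then c0 * (u - M0) else 0) + (if t = 1 then c1 * (u - M1) else 0))\<^sup>2 * q e u t)"
    by (rule integral_cells) (simp add: W_alt E_def M0_def M1_def c0_def c1_def)
  also have "\<dots> = G 0 c0 M0 + G 1 c1 M1"
    by (simp add: G_def q_subst power2_eq_square algebra_simps)
  also have "\<dots> = Vlim lam k0 k1"
  proof -
    have pp1: "pp (Suc 0) = 1 - pp 0" using sum_q by simp
    have g_ell: "(1 - E)\<^sup>2 * aa 0 + E\<^sup>2 * (pp 0 - aa 0) + ((1 - E)\<^sup>2 * aa 1 + E\<^sup>2 * (pp 1 - aa 1)) = E - E\<^sup>2"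
      by (simp add: pp1 E_def power2_eq_square algebra_simps)
    have v_ell: "(\<Sum>s\<in>{0, 1}. grp_prob P s * cond_var P ell s)
        + grp_prob P 0 * grp_prob P 1 * (cond_mean P ell 0 - cond_mean P ell 1)\<^sup>2 = E - E\<^sup>2"
    proof -
      have "(\<Sum>s\<in>{0, 1}. grp_prob P s * cond_var P ell s)
        + grp_prob P 0 * grp_prob P 1 * (cond_mean P ell 0 - cond_mean P ell 1)\<^sup>2
        = (aa 0 - (aa 0)\<^sup>2 / pp 0) + (aa 1 - (aa 1)\<^sup>2 / pp 1) + pp 0 * pp 1 * (aa 0 / pp 0 - aa 1 / pp 1)\<^sup>2"
        using p0 p1 by (simp add: grp_prob_eq cv_ell cm_ell)
      also have "\<dots> = E - E\<^sup>2"
      proof -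
        have e1: "pp 0 * pp 1 * (aa 0 / pp 0 - aa 1 / pp 1)\<^sup>2 = (aa 0)\<^sup>2 * pp 1 / pp 0 + (aa 1)\<^sup>2 * pp 0 / pp 1 - 2 * aa 0 * aa 1"
          using p0 p1 by (simp add: field_simps power2_eq_square)
        have e2: "(aa 0)\<^sup>2 * pp 1 / pp 0 - (aa 0)\<^sup>2 / pp 0 = - (aa 0)\<^sup>2"
        proof -
          have "(aa 0)\<^sup>2 * pp 1 / pp 0 - (aa 0)\<^sup>2 / pp 0 = (aa 0)\<^sup>2 * (pp 1 - 1) / pp 0" using p0 by (simp add: field_simps)
          also have "pp 1 - 1 = - pp 0" using sum_q by simp
          finally show ?thesis using p0 by simp
        qed
        have e3: "(aa 1)\<^sup>2 * pp 0 / pp 1 - (aa 1)\<^sup>2 / pp 1 = - (aa 1)\<^sup>2"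
        proof -
          have "(aa 1)\<^sup>2 * pp 0 / pp 1 - (aa 1)\<^sup>2 / pp 1 = (aa 1)\<^sup>2 * (pp 0 - 1) / pp 1" using p1 by (simp add: field_simps)
          also have "pp 0 - 1 = - pp 1" using sum_q by simp
          finally show ?thesis using p1 by simp
        qed
        show ?thesis unfolding e1 E_def using e2 e3 by (simp add: power2_eq_square algebra_simps)
      qed
      finally show ?thesis .
    qed
    have x0: "2 * lam * c0 * (dd 0 - E * bb 0 - M0 * aa 0 + E * M0 * pp 0) = 2 * lam * (1 - lam) * (k0 * cond_cov P ell mu 0)"
      using p0 by (simp add: cc c0_def M0_def field_simps)
    have x1: "2 * lam * c1 * (dd 1 - E * bb 1 - M1 * aa 1 + E * M1 * pp 1) = 2 * lam * (1 - lam) * (k1 * cond_cov P ell mu 1)"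
      using p1 by (simp add: cc c1_def M1_def field_simps)
    have m0: "c0\<^sup>2 * (bb 0 - 2 * M0 * bb 0 + M0\<^sup>2 * pp 0) = (1 - lam)\<^sup>2 * (k0\<^sup>2 * cond_var P mu 0 / grp_prob P 0)"
      using p0 by (simp add: cv_mu grp_prob_eq c0_def M0_def field_simps power2_eq_square)
    have m1: "c1\<^sup>2 * (bb 1 - 2 * M1 * bb 1 + M1\<^sup>2 * pp 1) = (1 - lam)\<^sup>2 * (k1\<^sup>2 * cond_var P mu 1 / grp_prob P 1)"
      using p1 by (simp add: cv_mu grp_prob_eq c1_def M1_def field_simps power2_eq_square)
    have "G 0 c0 M0 + G 1 c1 M1 = lam\<^sup>2 * ((1 - E)\<^sup>2 * aa 0 + E\<^sup>2 * (pp 0 - aa 0) + ((1 - E)\<^sup>2 * aa 1 + E\<^sup>2 * (pp 1 - aa 1)))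
       + 2 * lam * c0 * (dd 0 - E * bb 0 - M0 * aa 0 + E * M0 * pp 0)
       + 2 * lam * c1 * (dd 1 - E * bb 1 - M1 * aa 1 + E * M1 * pp 1)
       + c0\<^sup>2 * (bb 0 - 2 * M0 * bb 0 + M0\<^sup>2 * pp 0) + c1\<^sup>2 * (bb 1 - 2 * M1 * bb 1 + M1\<^sup>2 * pp 1)"
      unfolding G_def by (simp add: algebra_simps)
    also have "\<dots> = Vlim lam k0 k1"
      unfolding g_ell x0 x1 m0 m1 Vlim_def v_ell[symmetric] by (simp add: algebra_simps)
    finally show ?thesis .
  qed
  finally show ?thesis .
qed

end

lemma samp_mean_restrict: "samp_mean m g (restrict D {..<m}) = samp_mean m g D"
  unfolding samp_mean_def by (intro arg_cong2[where f="(/)"] sum.cong) auto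

lemma grp_count_restrict: "grp_count m (restrict D {..<m}) s = grp_count m D s"
  unfolding grp_count_def by (intro arg_cong[where f=card]) auto

lemma samp_grp_mean_restrict: "samp_grp_mean m g (restrict D {..<m}) s = samp_grp_mean m g D s"
proof -
  have "{j. j < m \<and> snd (restrict D {..<m} j) = s} = {j. j < m \<and> snd (D j) = s}" by auto
  moreover have "(\<Sum>j\<in>{j. j < m \<and> snd (D j) = s}. g (restrict D {..<m} j)) = (\<Sum>j\<in>{j. j < m \<and> snd (D j) = s}. g (D j))"
    by (intro sum.cong) auto
  ultimately show ?thesis unfolding samp_grp_mean_def grp_count_restrict by simp
qed

context ctx begin

definition Fn :: "real \<Rightarrow> (real \<times> real \<Rightarrow> real) \<Rightarrow> nat \<Rightarrow> (nat \<Rightarrow> 'z \<times> nat) \<Rightarrow> real" where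
  "Fn lam phi m D = sqrt (real m) *
           ((lam * samp_mean m ell D
             + (1 - lam) * phi (samp_grp_mean m mu D 0, samp_grp_mean m mu D 1))
          - (lam * P.expectation ell
             + (1 - lam) * phi (cond_mean P mu 0, cond_mean P mu 1)))"

lemma Fn_restrict: "Fn lam phi m (restrict D {..<m}) = Fn lam phi m D"
  unfolding Fn_def samp_mean_restrict samp_grp_mean_restrict ..

lemma sgm_range:
  assumes "\<And>j. j < m \<Longrightarrow> D j \<in> space P"
  shows "samp_grp_mean m mu D s \<in> (\<lambda>(a, b). real a / real b) ` ({..m} \<times> {..m})"
proof -
  have "(if snd (D j) = s then mu (D j) else 0) \<in> {0,1}" if j: "j < m" for j
  proof -
    have "mu (D j) \<in> {0,1}" by (rule mu_01[OF assms[OF j]])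
    then show ?thesis by simp
  qed
  then have "\<exists>k\<le>m. (\<Sum>j<m. if snd (D j) = s then mu (D j) else 0) = real k"
    by (rule sum_01_nat[of m "\<lambda>j. if snd (D j) = s then mu (D j) else 0"])
  then obtain k1 where k1: "k1 \<le> m" "(\<Sum>j<m. if snd (D j) = s then mu (D j) else 0) = real k1"
    by blast
  have "\<And>j. j < m \<Longrightarrow> (if snd (D j) = s then 1 else 0::real) \<in> {0,1}" by auto
  then have "\<exists>k\<le>m. (\<Sum>j<m. if snd (D j) = s then 1 else 0::real) = real k"
    by (rule sum_01_nat[of m "\<lambda>j. if snd (D j) = s then 1 else 0"])
  then obtain k2 where k2: "k2 \<le> m" "(\<Sum>j<m. if snd (D j) = s then 1 else 0::real) = real k2"
    by blast
  have "samp_grp_mean m mu D s = real k1 / real k2"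
    unfolding samp_grp_mean_alt k1 k2 by simp
  then show ?thesis using k1 k2 by force
qed

lemma phih_meas:
  fixes phi :: "real \<times> real \<Rightarrow> real"
  assumes I: "{..<m} \<subseteq> I"
  shows "(\<lambda>D. phi (samp_grp_mean m mu D 0, samp_grp_mean m mu D 1)) \<in> borel_measurable (PiM I (\<lambda>_. P))"
proof -
  have comp[measurable]: "j < m \<Longrightarrow> (\<lambda>D. D j) \<in> measurable (PiM I (\<lambda>_. P)) P" for j
    using I by (intro measurable_component_singleton) auto
  have sg: "(\<lambda>D. samp_grp_mean m mu D s) \<in> borel_measurable (PiM I (\<lambda>_. P))" for s
    unfolding samp_grp_mean_alt by measurable
  define Q where "Q = (\<lambda>(a, b). real a / real b) ` ({..m} \<times> {..m})"
  have h: "(\<lambda>D. (samp_grp_mean m mu D 0, samp_grp_mean m mu D 1)) \<in> borel_measurable (PiM I (\<lambda>_. P))"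
    using sg by measurable
  have rng: "(\<lambda>D. (samp_grp_mean m mu D 0, samp_grp_mean m mu D 1)) ` space (PiM I (\<lambda>_. P)) \<subseteq> Q \<times> Q"
  proof safe
    fix D assume D: "D \<in> space (PiM I (\<lambda>_. P))"
    have "\<And>j. j < m \<Longrightarrow> D j \<in> space P" using measurable_space[OF comp D] by blast
    then show "samp_grp_mean m mu D 0 \<in> Q" "samp_grp_mean m mu D 1 \<in> Q"
      unfolding Q_def by (auto intro: sgm_range)
  qed
  show ?thesis
    by (rule measurable_finite_range_comp[OF h _ rng]) (simp add: Q_def)
qed

lemma Fn_meas:
  assumes I: "{..<m} \<subseteq> I"
  shows "Fn lam phi m \<in> borel_measurable (PiM I (\<lambda>_. P))"
proof -
  have comp[measurable]: "j < m \<Longrightarrow> (\<lambda>D. D j) \<in> measurable (PiM I (\<lambda>_. P)) P" for j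
    using I by (intro measurable_component_singleton) auto
  have sm: "(\<lambda>D. samp_mean m ell D) \<in> borel_measurable (PiM I (\<lambda>_. P))"
    unfolding samp_mean_def by measurable
  note ph = phih_meas[OF I, of phi]
  show ?thesis unfolding Fn_def using sm ph by measurable
qed

lemma distr_Fn: "distr (PiM {..<m} (\<lambda>_. P)) borel (Fn lam phi m) = distr \<Omega> borel (Fn lam phi m)"
proof -
  have r[measurable]: "(\<lambda>D. restrict D {..<m}) \<in> measurable \<Omega> (PiM {..<m} (\<lambda>_. P))"
    by (rule measurable_restrict_subset) auto
  have "distr (PiM {..<m} (\<lambda>_. P)) borel (Fn lam phi m) =
        distr (distr \<Omega> (PiM {..<m} (\<lambda>_. P)) (\<lambda>D. restrict D {..<m})) borel (Fn lam phi m)"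
    by (simp add: product_prob_space.distr_PiM_restrict_finite[OF product_prob_spaceI[OF prob]])
  also have "\<dots> = distr \<Omega> borel (\<lambda>D. Fn lam phi m (restrict D {..<m}))"
    by (simp add: distr_distr[OF Fn_meas[OF order_refl] r] comp_def)
  also have "\<dots> = distr \<Omega> borel (Fn lam phi m)" by (simp add: Fn_restrict)
  finally show ?thesis .
qed

end

context ctx begin

definition vv :: "nat \<Rightarrow> 'z \<times> nat \<Rightarrow> real" where
  "vv s x = (if snd x = s then mu x - cond_mean P mu s else 0)"
definition uu :: "nat \<Rightarrow> 'z \<times> nat \<Rightarrow> real" where
  "uu s x = (if snd x = s then 1 else 0) - grp_prob P s"

definition Tn :: "real \<Rightarrow> real \<Rightarrow> real \<Rightarrow> nat \<Rightarrow> (nat \<Rightarrow> 'z \<times> nat) \<Rightarrow> real" where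
  "Tn lam k0 k1 n D = (\<Sum>j<n. W lam k0 k1 (D j)) / sqrt (real n)"

definition Rn :: "(real \<times> real \<Rightarrow> real) \<Rightarrow> real \<Rightarrow> real \<Rightarrow> nat \<Rightarrow> (nat \<Rightarrow> 'z \<times> nat) \<Rightarrow> real" where
  "Rn phi k0 k1 n D = sqrt (real n) * (phi (samp_grp_mean n mu D 0, samp_grp_mean n mu D 1)
      - phi (cond_mean P mu 0, cond_mean P mu 1))
    - (k0 * (\<Sum>j<n. vv 0 (D j)) / grp_prob P 0 + k1 * (\<Sum>j<n. vv 1 (D j)) / grp_prob P 1) / sqrt (real n)"

lemma W_vv: "W lam k0 k1 x = lam * (ell x - P.expectation ell) + (1 - lam) * (k0 * vv 0 x / grp_prob P 0 + k1 * vv 1 x / grp_prob P 1)"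
  by (cases "snd x = 0"; cases "snd x = 1") (auto simp: W_def vv_def)

lemma F_minus_T: "Fn lam phi n D - Tn lam k0 k1 n D = (1 - lam) * Rn phi k0 k1 n D"
proof -
  define E where "E = P.expectation ell"
  define S where "S = (\<Sum>j<n. ell (D j))"
  define A0 where "A0 = (\<Sum>j<n. vv 0 (D j))"
  define A1 where "A1 = (\<Sum>j<n. vv 1 (D j))"
  define Ph where "Ph = phi (samp_grp_mean n mu D 0, samp_grp_mean n mu D 1) - phi (cond_mean P mu 0, cond_mean P mu 1)"
  have sumW: "(\<Sum>j<n. W lam k0 k1 (D j)) = lam * (S - real n * E) + (1 - lam) * (k0 * A0 / grp_prob P 0 + k1 * A1 / grp_prob P 1)"
    unfolding W_vv S_def A0_def A1_def E_def
    by (simp add: sum.distrib sum_subtractf sum_distrib_left sum_divide_distrib[symmetric] algebra_simps)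
  show ?thesis
  proof (cases "n = 0")
    case True then show ?thesis by (simp add: Fn_def Tn_def Rn_def)
  next
    case False
    define s where "s = sqrt (real n)"
    have s: "s > 0" using False by (simp add: s_def)
    have ns: "real n = s * s" using False by (simp add: s_def)
    define C where "C = k0 * A0 / grp_prob P 0 + k1 * A1 / grp_prob P 1"
    have f: "Fn lam phi n D = s * (lam * (S / real n - E) + (1 - lam) * Ph)"
      unfolding Fn_def samp_mean_def S_def E_def Ph_def s_def by (simp add: algebra_simps)
    have t: "Tn lam k0 k1 n D = (lam * (S - real n * E) + (1 - lam) * C) / s"
      unfolding Tn_def sumW s_def C_def ..
    have r: "Rn phi k0 k1 n D = s * Ph - C / s"
      unfolding Rn_def Ph_def A0_def A1_def s_def C_def ..
    show ?thesis unfolding f t r ns using s by (simp add: field_simps)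
  qed
qed

lemma vv_meas[measurable]: "vv s \<in> borel_measurable P"
  unfolding vv_def by measurable
lemma uu_meas[measurable]: "uu s \<in> borel_measurable P"
  unfolding uu_def by measurable
lemma W_meas[measurable]: "W lam k0 k1 \<in> borel_measurable P"
  unfolding W_def by measurable

lemma grp_prob_le1: "grp_prob P s \<le> 1"
  unfolding grp_prob_def by (rule P.prob_le_1)

lemma vv_bnd: "x \<in> space P \<Longrightarrow> \<bar>vv s x\<bar> \<le> 1"
proof -
  assume x: "x \<in> space P"
  show ?thesis
  proof (cases "snd x = s")
    case True
    then have s: "s \<in> {0,1}" using snd_P[OF x] by auto
    have "cond_mean P mu s = bb s / pp s" using cm_mu[OF s] .
    moreover have "0 \<le> bb s" "bb s \<le> pp s" unfolding bb_def pp_def by (auto simp: q_def intro: add_nonneg_nonneg)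
    moreover have "pp s > 0" using pp_pos[OF s] .
    ultimately have "0 \<le> cond_mean P mu s" "cond_mean P mu s \<le> 1" by (auto simp: divide_le_eq_1)
    moreover have "mu x \<in> {0,1}" using mu_01[OF x] .
    ultimately show ?thesis using True by (auto simp: vv_def)
  qed (simp add: vv_def)
qed

lemma uu_bnd: "s \<in> {0,1} \<Longrightarrow> x \<in> space P \<Longrightarrow> \<bar>uu s x\<bar> \<le> 1"
  using pi_pos[of s] grp_prob_le1[of s] by (auto simp: uu_def)

lemma vv_mean: "s \<in> {0,1} \<Longrightarrow> P.expectation (vv s) = 0"
proof -
  assume s: "s \<in> {0,1}"
  have "P.expectation (vv s) = (\<Sum>e\<in>{0,1}. \<Sum>u\<in>{0,1}. \<Sum>t\<in>{0,1::nat}. (if t = s then u - bb s / pp s else 0) * q e u t)"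
    by (rule integral_cells) (simp add: vv_def cm_mu[OF s])
  also have "\<dots> = bb s - (bb s / pp s) * pp s"
  proof -
    define M where "M = bb s / pp s"
    have "(\<Sum>e\<in>{0,1}. \<Sum>u\<in>{0,1}. \<Sum>t\<in>{0,1::nat}. (if t = s then u - M else 0) * q e u t) = bb s - M * pp s"
      using s by (auto simp: bb_def pp_def algebra_simps)
    then show ?thesis unfolding M_def .
  qed
  also have "\<dots> = 0" using pp_pos[OF s] by simp
  finally show ?thesis .
qed

lemma uu_mean: "s \<in> {0,1} \<Longrightarrow> P.expectation (uu s) = 0"
proof -
  assume s: "s \<in> {0,1}"
  have "P.expectation (uu s) = (\<Sum>e\<in>{0,1}. \<Sum>u\<in>{0,1}. \<Sum>t\<in>{0,1::nat}. ((if t = s then 1 else 0) - pp s) * q e u t)"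
    by (rule integral_cells) (simp add: uu_def grp_prob_eq[OF s])
  also have "\<dots> = pp s - pp s * (pp 0 + pp 1)" using s by (auto simp: pp_def algebra_simps)
  also have "\<dots> = 0" using sum_q by simp
  finally show ?thesis .
qed

lemma sq_le1:
  fixes g :: "'z \<times> nat \<Rightarrow> real"
  assumes [measurable]: "g \<in> borel_measurable P" and b: "\<And>x. x \<in> space P \<Longrightarrow> \<bar>g x\<bar> \<le> 1"
  shows "P.expectation (\<lambda>x. (g x)\<^sup>2) \<le> 1"
proof -
  have "P.expectation (\<lambda>x. (g x)\<^sup>2) \<le> P.expectation (\<lambda>x. 1)"
  proof (rule integral_mono)
    show "integrable P (\<lambda>x. (g x)\<^sup>2)"
      by (rule P.integrable_const_bound[where B=1]) (auto intro!: AE_I2 simp: b abs_square_le_1)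
    show "(g x)\<^sup>2 \<le> 1" if "x \<in> space P" for x
      using b[OF that] by (simp add: abs_square_le_1)
  qed simp
  then show ?thesis by (simp add: P.prob_space)
qed

end

context ctx begin

lemma bad_prob_u:
  assumes s: "s \<in> {0,1}" and n: "n > 0" and d: "d > 0"
  shows "O.prob {\<omega> \<in> space \<Omega>. real n * d \<le> \<bar>\<Sum>j<n. uu s (\<omega> j)\<bar>} \<le> 1 / (real n * d\<^sup>2)"
proof -
  have "O.prob {\<omega> \<in> space \<Omega>. real n * d \<le> \<bar>\<Sum>j<n. uu s (\<omega> j)\<bar>} \<le> real n * P.expectation (\<lambda>x. (uu s x)\<^sup>2) / (real n * d)\<^sup>2"
    by (rule chebyshev_sum[OF uu_meas uu_bnd[OF s] uu_mean[OF s]]) (use n d in auto)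
  also have "\<dots> \<le> real n * 1 / (real n * d)\<^sup>2"
    using sq_le1[OF uu_meas uu_bnd[OF s]] n d by (intro divide_right_mono mult_left_mono) auto
  also have "\<dots> = 1 / (real n * d\<^sup>2)" using n d by (simp add: power2_eq_square)
  finally show ?thesis .
qed

lemma bad_prob_v:
  assumes s: "s \<in> {0,1}" and n: "n > 0" and K: "K > 0"
  shows "O.prob {\<omega> \<in> space \<Omega>. sqrt (real n) * K \<le> \<bar>\<Sum>j<n. vv s (\<omega> j)\<bar>} \<le> 1 / K\<^sup>2"
proof -
  have "O.prob {\<omega> \<in> space \<Omega>. sqrt (real n) * K \<le> \<bar>\<Sum>j<n. vv s (\<omega> j)\<bar>} \<le> real n * P.expectation (\<lambda>x. (vv s x)\<^sup>2) / (sqrt (real n) * K)\<^sup>2"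
    by (rule chebyshev_sum[OF vv_meas vv_bnd vv_mean[OF s]]) (use n K in auto)
  also have "\<dots> \<le> real n * 1 / (sqrt (real n) * K)\<^sup>2"
    using sq_le1[OF vv_meas vv_bnd] n K by (intro divide_right_mono mult_left_mono) auto
  also have "\<dots> = 1 / K\<^sup>2" using n K by (simp add: power_mult_distrib)
  finally show ?thesis .
qed

lemma sum_vv: fixes D :: "nat \<Rightarrow> 'z \<times> nat" and n :: nat shows "(\<Sum>j<n. vv s (D j)) = (\<Sum>j<n. if snd (D j) = s then mu (D j) else 0)
    - cond_mean P mu s * (\<Sum>j<n. if snd (D j) = s then 1 else 0)"
  by (induct n) (auto simp: vv_def algebra_simps)

lemma sum_uu: fixes D :: "nat \<Rightarrow> 'z \<times> nat" and n :: nat shows "(\<Sum>j<n. uu s (D j)) = (\<Sum>j<n. if snd (D j) = s then 1 else 0) - real n * grp_prob P s"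
  by (induct n) (auto simp: uu_def algebra_simps)

lemma sgm_good:
  fixes D :: "nat \<Rightarrow> 'z \<times> nat" and n :: nat
  assumes "(\<Sum>j<n. if snd (D j) = s then 1 else 0::real) > 0"
  shows "samp_grp_mean n mu D s = cond_mean P mu s + (\<Sum>j<n. vv s (D j)) / (\<Sum>j<n. if snd (D j) = s then 1 else 0)"
  using assms unfolding samp_grp_mean_alt sum_vv by (simp add: field_simps)


lemma R_good:
  fixes phi :: "real \<times> real \<Rightarrow> real" and D :: "nat \<Rightarrow> 'z \<times> nat" and n :: nat
  assumes n: "n > 0" and K: "K > 0" and d: "d > 0" "d \<le> grp_prob P 0 / 2" "d \<le> grp_prob P 1 / 2"
    and gu0: "\<bar>\<Sum>j<n. uu 0 (D j)\<bar> < real n * d" and gu1: "\<bar>\<Sum>j<n. uu 1 (D j)\<bar> < real n * d"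
    and gv0: "\<bar>\<Sum>j<n. vv 0 (D j)\<bar> < sqrt (real n) * K" and gv1: "\<bar>\<Sum>j<n. vv 1 (D j)\<bar> < sqrt (real n) * K"
    and deriv: "\<And>y. norm (y - (cond_mean P mu 0, cond_mean P mu 1)) < \<delta> \<Longrightarrow>
        \<bar>phi y - phi (cond_mean P mu 0, cond_mean P mu 1) - (k0 * (fst y - cond_mean P mu 0) + k1 * (snd y - cond_mean P mu 1))\<bar>
          \<le> \<eta> * norm (y - (cond_mean P mu 0, cond_mean P mu 1))"
    and eta: "\<eta> \<ge> 0"
    and small: "2 * K / (sqrt (real n) * grp_prob P 0) + 2 * K / (sqrt (real n) * grp_prob P 1) < \<delta>"
  shows "\<bar>Rn phi k0 k1 n D\<bar> \<le> \<eta> * (2 * K / grp_prob P 0 + 2 * K / grp_prob P 1)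
      + \<bar>k0\<bar> * (2 * K * d / (grp_prob P 0)\<^sup>2) + \<bar>k1\<bar> * (2 * K * d / (grp_prob P 1)\<^sup>2)"
proof -
  define c0 where "c0 = (\<Sum>j<n. if snd (D j) = 0 then 1 else 0::real)"
  define c1 where "c1 = (\<Sum>j<n. if snd (D j) = 1 then 1 else 0::real)"
  have p0: "grp_prob P 0 > 0" and p1: "grp_prob P 1 > 0" using pi_pos by auto
  have nr: "real n > 0" using n by simp
  have c0: "\<bar>c0 - real n * grp_prob P 0\<bar> < real n * d" using gu0 unfolding sum_uu c0_def .
  have c1: "\<bar>c1 - real n * grp_prob P 1\<bar> < real n * d" using gu1 unfolding sum_uu c1_def .
  have c0p: "c0 > 0"
    using grp_term_bound(1)[OF p0 nr K d(1) d(2) c0 gv0] nr p0 by (smt (verit) divide_pos_pos mult_pos_pos)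
  have c1p: "c1 > 0"
    using grp_term_bound(1)[OF p1 nr K d(1) d(3) c1 gv1] nr p1 by (smt (verit) divide_pos_pos mult_pos_pos)
  have s0: "samp_grp_mean n mu D 0 = cond_mean P mu 0 + (\<Sum>j<n. vv 0 (D j)) / c0"
    unfolding c0_def by (rule sgm_good) (use c0p[unfolded c0_def] in simp)
  have s1: "samp_grp_mean n mu D 1 = cond_mean P mu 1 + (\<Sum>j<n. vv 1 (D j)) / c1"
    unfolding c1_def by (rule sgm_good) (use c1p[unfolded c1_def] in simp)
  show ?thesis
    unfolding Rn_def s0 s1
    by (rule det_bound[OF p0 p1 nr K d c0 c1 gv0 gv1 deriv eta small])
qed


lemma Rn_meas[measurable]:
  fixes phi :: "real \<times> real \<Rightarrow> real"
  shows "Rn phi k0 k1 n \<in> borel_measurable \<Omega>"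
proof -
  note ph = phih_meas[of n UNIV phi]
  show ?thesis unfolding Rn_def using ph by measurable
qed

lemma R_inprob:
  fixes phi :: "real \<times> real \<Rightarrow> real"
  assumes grad: "(phi has_derivative (\<lambda>(h0, h1). k0 * h0 + k1 * h1)) (at (cond_mean P mu 0, cond_mean P mu 1))"
    and e: "\<epsilon> > 0"
  shows "(\<lambda>n. O.prob {\<omega> \<in> space \<Omega>. \<epsilon> < \<bar>Rn phi k0 k1 n \<omega>\<bar>}) \<longlonglongrightarrow> 0"
proof (rule LIMSEQ_I)
  fix r :: real assume r: "r > 0"
  define p0 where "p0 = grp_prob P 0"
  define p1 where "p1 = grp_prob P 1"
  define M where "M = (cond_mean P mu 0, cond_mean P mu 1)"
  have p0: "p0 > 0" and p1: "p1 > 0" using pi_pos by (auto simp: p0_def p1_def)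
  define K where "K = sqrt (8 / r) + 1"
  have K: "K > 0" using r by (simp add: K_def add_nonneg_pos)
  have "sqrt (8 / r) \<le> K" by (simp add: K_def)
  then have "(sqrt (8 / r))\<^sup>2 \<le> K\<^sup>2" by (rule power_mono) (use r in simp)
  then have K2': "8 / r \<le> K\<^sup>2" using r by simp
  have K2: "2 / K\<^sup>2 \<le> r / 4"
  proof -
    have "2 / K\<^sup>2 \<le> 2 / (8 / r)" using K2' r K by (intro divide_left_mono) auto
    also have "\<dots> = r / 4" by simp
    finally show ?thesis .
  qed
  define B where "B = 2 * K / p0 + 2 * K / p1"
  have B: "B > 0" using K p0 p1 unfolding B_def by (intro add_pos_pos divide_pos_pos mult_pos_pos) auto
  define \<eta> where "\<eta> = \<epsilon> / (2 * B)"
  have eta: "\<eta> > 0" using e B by (simp add: \<eta>_def)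
  have etaB: "\<eta> * B = \<epsilon> / 2" using B by (simp add: \<eta>_def)
  define Cd where "Cd = \<bar>k0\<bar> * (2 * K / p0\<^sup>2) + \<bar>k1\<bar> * (2 * K / p1\<^sup>2) + 1"
  have Cd: "Cd > 0" using K p0 p1 unfolding Cd_def
    by (intro add_nonneg_pos add_nonneg_nonneg mult_nonneg_nonneg divide_nonneg_nonneg) auto
  define d where "d = min (min (p0 / 2) (p1 / 2)) (\<epsilon> / (2 * Cd))"
  have d: "d > 0" "d \<le> p0 / 2" "d \<le> p1 / 2" "d \<le> \<epsilon> / (2 * Cd)" using p0 p1 e Cd by (auto simp: d_def)
  have dC: "\<bar>k0\<bar> * (2 * K * d / p0\<^sup>2) + \<bar>k1\<bar> * (2 * K * d / p1\<^sup>2) \<le> \<epsilon> / 2"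
  proof -
    have "\<bar>k0\<bar> * (2 * K * d / p0\<^sup>2) + \<bar>k1\<bar> * (2 * K * d / p1\<^sup>2) = d * (Cd - 1)"
      by (simp add: Cd_def algebra_simps)
    also have "\<dots> \<le> d * Cd" using d by simp
    also have "\<dots> \<le> (\<epsilon> / (2 * Cd)) * Cd" using d Cd by (intro mult_right_mono) auto
    also have "\<dots> = \<epsilon> / 2" using Cd by simp
    finally show ?thesis .
  qed
  obtain \<delta> where \<delta>: "\<delta> > 0" and dv: "\<And>y. norm (y - M) < \<delta> \<Longrightarrow>
      norm (phi y - phi M - (\<lambda>(h0, h1). k0 * h0 + k1 * h1) (y - M)) \<le> \<eta> * norm (y - M)"
    using grad[unfolded has_derivative_at_alt] eta unfolding M_def[symmetric] by blast
  have deriv: "\<bar>phi y - phi (cond_mean P mu 0, cond_mean P mu 1) - (k0 * (fst y - cond_mean P mu 0) + k1 * (snd y - cond_mean P mu 1))\<bar>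
          \<le> \<eta> * norm (y - (cond_mean P mu 0, cond_mean P mu 1))"
    if "norm (y - (cond_mean P mu 0, cond_mean P mu 1)) < \<delta>" for y
    using dv[of y] that unfolding M_def by (cases y) simp
  have lim1: "(\<lambda>n. B / sqrt (real n)) \<longlonglongrightarrow> 0"
    by (rule tendsto_divide_0[OF tendsto_const])
       (rule filterlim_at_top_imp_at_infinity[OF filterlim_compose[OF sqrt_at_top filterlim_real_sequentially]])
  have lim2: "(\<lambda>n. (2 / d\<^sup>2) / real n) \<longlonglongrightarrow> 0"
    by (rule tendsto_divide_0[OF tendsto_const])
       (rule filterlim_at_top_imp_at_infinity[OF filterlim_real_sequentially])
  have ev: "eventually (\<lambda>n. n > 0 \<and> B / sqrt (real n) < \<delta> \<and> (2 / d\<^sup>2) / real n < r / 4) sequentially"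
  proof -
    have r4: "0 < r / 4" using r by simp
    show ?thesis
      using eventually_gt_at_top[of 0] order_tendstoD(2)[OF lim1 \<delta>] order_tendstoD(2)[OF lim2 r4]
      by eventually_elim auto
  qed
  then obtain N where N: "\<And>n. n \<ge> N \<Longrightarrow> n > 0 \<and> B / sqrt (real n) < \<delta> \<and> (2 / d\<^sup>2) / real n < r / 4"
    unfolding eventually_sequentially by blast
  show "\<exists>no. \<forall>n\<ge>no. norm (O.prob {\<omega> \<in> space \<Omega>. \<epsilon> < \<bar>Rn phi k0 k1 n \<omega>\<bar>} - 0) < r"
  proof (intro exI allI impI)
    fix n assume "n \<ge> N"
    note Nn = N[OF this]
    have n: "n > 0" using Nn by simp
    define U0 where "U0 = {\<omega> \<in> space \<Omega>. real n * d \<le> \<bar>\<Sum>j<n. uu 0 (\<omega> j)\<bar>}"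
    define U1 where "U1 = {\<omega> \<in> space \<Omega>. real n * d \<le> \<bar>\<Sum>j<n. uu 1 (\<omega> j)\<bar>}"
    define V0 where "V0 = {\<omega> \<in> space \<Omega>. sqrt (real n) * K \<le> \<bar>\<Sum>j<n. vv 0 (\<omega> j)\<bar>}"
    define V1 where "V1 = {\<omega> \<in> space \<Omega>. sqrt (real n) * K \<le> \<bar>\<Sum>j<n. vv 1 (\<omega> j)\<bar>}"
    have meas: "U0 \<in> sets \<Omega>" "U1 \<in> sets \<Omega>" "V0 \<in> sets \<Omega>" "V1 \<in> sets \<Omega>"
      unfolding U0_def U1_def V0_def V1_def by measurable
    have small: "2 * K / (sqrt (real n) * grp_prob P 0) + 2 * K / (sqrt (real n) * grp_prob P 1) < \<delta>"
    proof -
      have "2 * K / (sqrt (real n) * grp_prob P 0) + 2 * K / (sqrt (real n) * grp_prob P 1) = B / sqrt (real n)"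
        unfolding B_def p0_def p1_def by (simp add: add_divide_distrib mult.commute)
      then show ?thesis using Nn by simp
    qed
    have sub: "{\<omega> \<in> space \<Omega>. \<epsilon> < \<bar>Rn phi k0 k1 n \<omega>\<bar>} \<subseteq> U0 \<union> U1 \<union> V0 \<union> V1"
    proof (rule subsetI, rule ccontr)
      fix \<omega> assume w: "\<omega> \<in> {\<omega> \<in> space \<Omega>. \<epsilon> < \<bar>Rn phi k0 k1 n \<omega>\<bar>}" and nb: "\<omega> \<notin> U0 \<union> U1 \<union> V0 \<union> V1"
      have g: "\<bar>\<Sum>j<n. uu 0 (\<omega> j)\<bar> < real n * d" "\<bar>\<Sum>j<n. uu 1 (\<omega> j)\<bar> < real n * d"
        "\<bar>\<Sum>j<n. vv 0 (\<omega> j)\<bar> < sqrt (real n) * K" "\<bar>\<Sum>j<n. vv 1 (\<omega> j)\<bar> < sqrt (real n) * K"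
        using w nb by (auto simp: U0_def U1_def V0_def V1_def)
      have "\<bar>Rn phi k0 k1 n \<omega>\<bar> \<le> \<eta> * (2 * K / grp_prob P 0 + 2 * K / grp_prob P 1)
          + \<bar>k0\<bar> * (2 * K * d / (grp_prob P 0)\<^sup>2) + \<bar>k1\<bar> * (2 * K * d / (grp_prob P 1)\<^sup>2)"
        by (rule R_good[OF n K d(1) d(2)[unfolded p0_def] d(3)[unfolded p1_def] g deriv eta[THEN less_imp_le] small])
      also have "\<dots> \<le> \<epsilon>"
      proof -
        have gen: "\<And>a b c. a = \<epsilon>/2 \<Longrightarrow> b + c \<le> \<epsilon>/2 \<Longrightarrow> a + b + c \<le> \<epsilon>" by simp
        show ?thesis by (rule gen[OF etaB[unfolded B_def p0_def p1_def] dC[unfolded p0_def p1_def]])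
      qed
      finally show False using w by simp
    qed
    have "O.prob {\<omega> \<in> space \<Omega>. \<epsilon> < \<bar>Rn phi k0 k1 n \<omega>\<bar>} \<le> O.prob (U0 \<union> U1 \<union> V0 \<union> V1)"
      by (rule O.finite_measure_mono[OF sub]) (use meas in auto)
    also have "\<dots> \<le> O.prob U0 + O.prob U1 + O.prob V0 + O.prob V1"
      using meas by (meson add_mono order.trans measure_Un_le order_refl sets.Un)
    also have "\<dots> \<le> 1 / (real n * d\<^sup>2) + 1 / (real n * d\<^sup>2) + 1 / K\<^sup>2 + 1 / K\<^sup>2"
      unfolding U0_def U1_def V0_def V1_def
      by (intro add_mono bad_prob_u bad_prob_v) (use n d K in auto)
    also have "\<dots> = (2 / d\<^sup>2) / real n + 2 / K\<^sup>2" by (simp add: field_simps)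
    also have "\<dots> < r" using Nn K2 r by linarith
    finally show "norm (O.prob {\<omega> \<in> space \<Omega>. \<epsilon> < \<bar>Rn phi k0 k1 n \<omega>\<bar>} - 0) < r" by simp
  qed
qed

end

context ctx begin

lemma bounded_cells:
  fixes f :: "'z \<times> nat \<Rightarrow> real" and g :: "real \<Rightarrow> real \<Rightarrow> nat \<Rightarrow> real"
  assumes "\<And>x. x \<in> space P \<Longrightarrow> f x = g (ell x) (mu x) (snd x)"
  shows "\<And>x. x \<in> space P \<Longrightarrow> \<bar>f x\<bar> \<le> (\<Sum>e\<in>{0,1}. \<Sum>u\<in>{0,1}. \<Sum>s\<in>{0,1::nat}. \<bar>g e u s\<bar>)"
proof -
  fix x assume x: "x \<in> space P"
  have m: "ell x \<in> {0,1}" "mu x \<in> {0,1}" "snd x \<in> {0,1}"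
    using ell_01[OF x] mu_01[OF x] snd_P[OF x] by auto
  have "\<bar>g (ell x) (mu x) (snd x)\<bar> \<le> (\<Sum>s\<in>{0,1::nat}. \<bar>g (ell x) (mu x) s\<bar>)"
    by (rule member_le_sum[OF m(3), where f="\<lambda>s. \<bar>g (ell x) (mu x) s\<bar>"]) auto
  also have "\<dots> \<le> (\<Sum>u\<in>{0,1}. \<Sum>s\<in>{0,1::nat}. \<bar>g (ell x) u s\<bar>)"
    by (rule member_le_sum[OF m(2), where f="\<lambda>u. \<Sum>s\<in>{0,1::nat}. \<bar>g (ell x) u s\<bar>"]) (auto intro: sum_nonneg)
  also have "\<dots> \<le> (\<Sum>e\<in>{0,1}. \<Sum>u\<in>{0,1}. \<Sum>s\<in>{0,1::nat}. \<bar>g e u s\<bar>)"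
    by (rule member_le_sum[OF m(1), where f="\<lambda>e. \<Sum>u\<in>{0,1}. \<Sum>s\<in>{0,1::nat}. \<bar>g e u s\<bar>"]) (auto intro: sum_nonneg)
  finally show "\<bar>f x\<bar> \<le> (\<Sum>e\<in>{0,1}. \<Sum>u\<in>{0,1}. \<Sum>s\<in>{0,1::nat}. \<bar>g e u s\<bar>)"
    unfolding assms[OF x] .
qed

lemma W_bnd: "\<exists>C. \<forall>x\<in>space P. \<bar>W lam k0 k1 x\<bar> \<le> C"
proof -
  define gW where "gW = (\<lambda>e u (s::nat). lam * (e - (aa 0 + aa 1)) + (if s = 0 then ((1 - lam) * k0 / pp 0) * (u - bb 0 / pp 0) else 0)
     + (if s = 1 then ((1 - lam) * k1 / pp 1) * (u - bb 1 / pp 1) else 0))"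
  have "\<And>x. x \<in> space P \<Longrightarrow> W lam k0 k1 x = gW (ell x) (mu x) (snd x)"
    by (simp add: W_alt gW_def)
  from bounded_cells[of "W lam k0 k1" gW, OF this] show ?thesis by blast
qed


lemma main:
  fixes phi :: "real \<times> real \<Rightarrow> real" and lam k0 k1 :: real
  assumes grad: "(phi has_derivative (\<lambda>(h0, h1). k0 * h0 + k1 * h1)) (at (cond_mean P mu 0, cond_mean P mu 1))"
  shows "weak_conv_m (\<lambda>m. distr (PiM {..<m} (\<lambda>_. P)) borel (Fn lam phi m)) (normal0 (Vlim lam k0 k1))"
proof -
  have seq: "(\<lambda>m. distr (PiM {..<m} (\<lambda>_. P)) borel (Fn lam phi m)) = (\<lambda>m. distr \<Omega> borel (Fn lam phi m))"
    by (simp add: distr_Fn)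
  have Fm[measurable]: "Fn lam phi n \<in> borel_measurable \<Omega>" for n by (rule Fn_meas) simp
  have Tm[measurable]: "Tn lam k0 k1 n \<in> borel_measurable \<Omega>" for n unfolding Tn_def by measurable
  obtain C where C: "\<And>x. x \<in> space P \<Longrightarrow> \<bar>W lam k0 k1 x\<bar> \<le> C" using W_bnd by blast
  have V_eq: "P.expectation (\<lambda>x. (W lam k0 k1 x)\<^sup>2) = Vlim lam k0 k1" by (rule EW2)
  have V_nn: "Vlim lam k0 k1 \<ge> 0" unfolding V_eq[symmetric] by (rule integral_nonneg_AE) simp
  have R: "(\<lambda>n. O.prob {\<omega> \<in> space \<Omega>. \<epsilon> < \<bar>(1 - lam) * Rn phi k0 k1 n \<omega>\<bar>}) \<longlonglongrightarrow> 0" if e: "\<epsilon> > 0" for \<epsilon>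
    by (rule O.inprob_scale[OF Rn_meas R_inprob[OF grad] e])
  have FT: "Fn lam phi n \<omega> = (1 - lam) * Rn phi k0 k1 n \<omega> + Tn lam k0 k1 n \<omega>" for n \<omega>
    using F_minus_T[of lam phi n \<omega> k0 k1] by simp
  have goal: "weak_conv_m (\<lambda>m. distr \<Omega> borel (Fn lam phi m)) (normal0 (Vlim lam k0 k1))"
  proof (cases "Vlim lam k0 k1 = 0")
    case False
    then have Vp: "Vlim lam k0 k1 > 0" using V_nn by simp
    define \<sigma> where "\<sigma> = sqrt (Vlim lam k0 k1)"
    have \<sigma>: "\<sigma> > 0" using Vp by (simp add: \<sigma>_def)
    have \<sigma>2: "\<sigma>\<^sup>2 = Vlim lam k0 k1" using Vp by (simp add: \<sigma>_def)
    have sqb: "(W lam k0 k1 (\<omega> i))\<^sup>2 \<le> C\<^sup>2" if "\<omega> \<in> space \<Omega>" for \<omega> i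
    proof -
      have "\<bar>W lam k0 k1 (\<omega> i)\<bar> \<le> C" by (rule C[OF measurable_space[OF coord_meas that]])
      then have "\<bar>W lam k0 k1 (\<omega> i)\<bar>\<^sup>2 \<le> C\<^sup>2" by (rule power_mono) simp
      then show ?thesis by simp
    qed
    have intsq: "integrable \<Omega> (\<lambda>\<omega>. (W lam k0 k1 (\<omega> i))\<^sup>2)" for i
      by (rule O.integrable_const_bound[where B="C\<^sup>2"]) (auto intro!: AE_I2 simp: sqb)
    have EX0: "O.expectation (\<lambda>\<omega>. W lam k0 k1 (\<omega> i)) = 0" for i
      by (simp add: integral_coord EW)
    have var: "O.variance (\<lambda>\<omega>. W lam k0 k1 (\<omega> i)) = \<sigma>\<^sup>2" for i
      using integral_coord[of "\<lambda>x. (W lam k0 k1 x)\<^sup>2" i] by (simp add: EX0 V_eq \<sigma>2)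
    have dist: "distr \<Omega> borel (\<lambda>\<omega>. W lam k0 k1 (\<omega> i)) = distr P borel (W lam k0 k1)" for i
    proof -
      have "distr \<Omega> borel (\<lambda>\<omega>. W lam k0 k1 (\<omega> i)) = distr (distr \<Omega> P (\<lambda>\<omega>. \<omega> i)) borel (W lam k0 k1)"
        by (simp add: distr_distr comp_def)
      then show ?thesis by (simp add: distr_coord)
    qed
    have clt: "weak_conv_m (\<lambda>n. distr \<Omega> borel (\<lambda>x. (\<Sum>i<n. W lam k0 k1 (x i)) / sqrt (real n)))
        (density lborel (normal_density 0 \<sigma>))"
      by (rule O.clt_scaled[OF indep_v[OF W_meas] EX0 \<sigma> intsq var dist])
    have clt': "weak_conv_m (\<lambda>n. distr \<Omega> borel (Tn lam k0 k1 n)) (normal0 (Vlim lam k0 k1))"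
      using clt unfolding normal0_def Tn_def \<sigma>_def using False by simp
    have rd: "real_distribution (normal0 (Vlim lam k0 k1))"
      unfolding normal0_def using False prob_space_normal_density[OF \<sigma>, of 0]
      by (simp add: real_distribution_def real_distribution_axioms_def \<sigma>_def)
    have small: "(\<lambda>n. O.prob {\<omega> \<in> space \<Omega>. \<epsilon> < \<bar>Fn lam phi n \<omega> - Tn lam k0 k1 n \<omega>\<bar>}) \<longlonglongrightarrow> 0"
      if e: "\<epsilon> > 0" for \<epsilon>
      using R[OF e] by (simp add: FT)
    show ?thesis by (rule O.slutsky[OF Tm Fm clt' rd small])
  next
    case True
    have n0: "normal0 (Vlim lam k0 k1) = return borel 0" by (simp add: normal0_def True)
    have conv0: "weak_conv_m (\<lambda>n. distr \<Omega> borel (\<lambda>_. 0::real)) (normal0 (Vlim lam k0 k1))"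
      unfolding n0 weak_conv_m_def weak_conv_def by simp
    have rd: "real_distribution (normal0 (Vlim lam k0 k1))"
      unfolding n0 by (simp add: real_distribution_def real_distribution_axioms_def prob_space_return)
    have T0: "(\<lambda>n. O.prob {\<omega> \<in> space \<Omega>. \<epsilon> < \<bar>Tn lam k0 k1 n \<omega>\<bar>}) \<longlonglongrightarrow> 0" if e: "\<epsilon> > 0" for \<epsilon>
    proof -
      have "O.prob {\<omega> \<in> space \<Omega>. \<epsilon> < \<bar>Tn lam k0 k1 n \<omega>\<bar>} = 0" for n
      proof (cases "n = 0")
        case True then show ?thesis using e by (simp add: Tn_def)
      next
        case False
        have sub: "{\<omega> \<in> space \<Omega>. \<epsilon> < \<bar>Tn lam k0 k1 n \<omega>\<bar>} \<subseteq> {\<omega> \<in> space \<Omega>. \<epsilon> * sqrt (real n) \<le> \<bar>\<Sum>j<n. W lam k0 k1 (\<omega> j)\<bar>}"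
          using False by (auto simp: Tn_def abs_div pos_less_divide_eq)
        have "O.prob {\<omega> \<in> space \<Omega>. \<epsilon> < \<bar>Tn lam k0 k1 n \<omega>\<bar>} \<le> O.prob {\<omega> \<in> space \<Omega>. \<epsilon> * sqrt (real n) \<le> \<bar>\<Sum>j<n. W lam k0 k1 (\<omega> j)\<bar>}"
          by (rule O.finite_measure_mono[OF sub]) measurable
        also have "\<dots> \<le> real n * P.expectation (\<lambda>x. (W lam k0 k1 x)\<^sup>2) / (\<epsilon> * sqrt (real n))\<^sup>2"
          by (rule chebyshev_sum[OF W_meas C EW]) (assumption, intro mult_pos_pos e, use False in simp)
        also have "\<dots> = 0" by (simp add: V_eq True)
        finally show ?thesis by (simp add: order_antisym)
      qed
      then show ?thesis by simp
    qed
    have small: "(\<lambda>n. O.prob {\<omega> \<in> space \<Omega>. \<epsilon> < \<bar>Fn lam phi n \<omega> - 0\<bar>}) \<longlonglongrightarrow> 0"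
      if e: "\<epsilon> > 0" for \<epsilon>
    proof -
      have "(\<lambda>n. O.prob {\<omega> \<in> space \<Omega>. \<epsilon> < \<bar>(1 - lam) * Rn phi k0 k1 n \<omega> + Tn lam k0 k1 n \<omega>\<bar>}) \<longlonglongrightarrow> 0"
        by (rule O.inprob_add[OF _ _ R T0 e]) measurable
      then show ?thesis by (simp add: FT)
    qed
    show ?thesis by (rule O.slutsky[OF _ Fm conv0 rd small]) simp
  qed
  then show ?thesis unfolding seq .
qed

end

theorem theorem1:
  fixes Mz :: "'z measure"
    and P :: "('z \<times> nat) measure"
    and ell mu :: "'z \<times> nat \<Rightarrow> real"
    and lam :: real
    and phi :: "real \<times> real \<Rightarrow> real"
    and k0 k1 :: real
  assumes prob: "prob_space P"
    and sets_P: "sets P = sets (Mz \<Otimes>\<^sub>M count_space {0, 1})"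
    and pi_pos: "\<And>s. s \<in> {0, 1} \<Longrightarrow> grp_prob P s > 0"
    and ell_meas: "ell \<in> borel_measurable P"
    and mu_meas: "mu \<in> borel_measurable P"
    and ell_01: "\<And>x. x \<in> space P \<Longrightarrow> ell x \<in> {0, 1}"
    and mu_01: "\<And>x. x \<in> space P \<Longrightarrow> mu x \<in> {0, 1}"
    and lam_range: "0 \<le> lam" "lam \<le> 1"
    and phi_nonneg: "\<And>x. phi x \<ge> 0"
    and phi_grad: "(phi has_derivative (\<lambda>(h0, h1). k0 * h0 + k1 * h1))
                     (at (cond_mean P mu 0, cond_mean P mu 1))"
  shows "weak_conv_m
     (\<lambda>m. distr (PiM {..<m} (\<lambda>_. P)) borel
        (\<lambda>D. sqrt (real m) *
           ((lam * samp_mean m ell D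
             + (1 - lam) * phi (samp_grp_mean m mu D 0, samp_grp_mean m mu D 1))
          - (lam * prob_space.expectation P ell
             + (1 - lam) * phi (cond_mean P mu 0, cond_mean P mu 1)))))
     (normal0
       (lam\<^sup>2 * (\<Sum>s\<in>{0, 1}. grp_prob P s * cond_var P ell s)
        + lam\<^sup>2 * grp_prob P 0 * grp_prob P 1 * (cond_mean P ell 0 - cond_mean P ell 1)\<^sup>2
        + (1 - lam)\<^sup>2 * (k0\<^sup>2 * cond_var P mu 0 / grp_prob P 0
                         + k1\<^sup>2 * cond_var P mu 1 / grp_prob P 1)
        + 2 * lam * (1 - lam) * (k0 * cond_cov P ell mu 0 + k1 * cond_cov P ell mu 1)))"
proof -
  interpret C: ctx Mz P ell mu
    by (rule ctx.intro[OF prob sets_P pi_pos ell_meas mu_meas ell_01 mu_01])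
  have "weak_conv_m (\<lambda>m. distr (PiM {..<m} (\<lambda>_. P)) borel (C.Fn lam phi m)) (normal0 (C.Vlim lam k0 k1))"
    by (rule C.main[OF phi_grad])
  then show ?thesis unfolding C.Fn_def C.Vlim_def .
qed

end
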